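(* Let $\mathcal{H}_A$ have orthonormal basis $\ket{1},\ldots,\ket{N}$ and $\mathcal{H}_R$ be a finite-dimensional Hilbert space. Fix $i$ and a unitary $U$ on $\mathcal{H}_R$, and let $O_i$ be the unitary on $\mathcal{H}_A\otimes\mathcal{H}_R$ with $O_i\ket{i}\otimes\ket{w}=\ket{i}\otimes\ket{Uw}$ and $O_i\ket{j}\otimes\ket{w}=\ket{j}\otimes\ket{w}$ for $j\neq i$; assume $O_i$ is self-adjoint. For $p\in[0,1]$ let $\mathcal{F}_i^p(\rho)=(1-p)\rho+p\,O_i\rho O_i^\dagger$, and let $P_i=\ket{i}\bra{i}\otimes\mathrm{Id}$. Let $0<\eta<1$. Then for all density matrices $\rho,\sigma$ on $\mathcal{H}_A\otimes\mathcal{H}_R$ and all $p,q\in[\eta,1-\eta]$, $$\sqrt{F}(\mathcal{F}_i^p(\rho),\mathcal{F}_i^q(\sigma))\geq\sqrt{F}(\rho,\sigma)-\frac{(p-q)^2}{\eta(1-\eta)}\sqrt{\mathrm{tr}(P_i\rho)\,\mathrm{tr}(P_i\sigma)}.$$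
   Context: For density matrices $\rho,\sigma$ the (root) fidelity is $\sqrt{F}(\rho,\sigma)=\mathrm{tr}\sqrt{\rho^{1/2}\sigma\rho^{1/2}}$. *)

theory Defs
  imports "HOL-Analysis.Analysis"
begin

text \<open>Operators on a finite-dimensional complex Hilbert space with orthonormal basis
  indexed by a finite type are represented as complex square matrices in that basis.
  H_A has basis indexed by the finite type 'a (N = CARD('a)); H_R has basis indexed by
  the finite type 'r; H_A tensor H_R has basis indexed by 'a * 'r, the basis vector
  (j,w) being the product vector of basis vector j and basis vector w.\<close>

definition adj :: "complex^'n^'n \<Rightarrow> complex^'n^'n" where
  "adj A = (\<chi> i j. cnj (A $ j $ i))"

definition hermitian :: "complex^'n^'n \<Rightarrow> bool" where
  "hermitian A \<longleftrightarrow> adj A = A"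

definition unitary :: "complex^'n^'n \<Rightarrow> bool" where
  "unitary U \<longleftrightarrow> adj U ** U = mat 1 \<and> U ** adj U = mat 1"

definition cinner :: "complex^'n \<Rightarrow> complex^'n \<Rightarrow> complex" where
  "cinner v w = (\<Sum>i\<in>UNIV. cnj (v $ i) * w $ i)"

definition psd :: "complex^'n^'n \<Rightarrow> bool" where
  "psd A \<longleftrightarrow> hermitian A \<and>
     (\<forall>v. Im (cinner v (A *v v)) = 0 \<and> Re (cinner v (A *v v)) \<ge> 0)"

definition density :: "complex^'n^'n \<Rightarrow> bool" where
  "density \<rho> \<longleftrightarrow> psd \<rho> \<and> trace \<rho> = 1"

definition msqrt :: "complex^'n^'n \<Rightarrow> complex^'n^'n" where
  "msqrt A = (THE B. psd B \<and> B ** B = A)"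

definition sqrt_fidelity :: "complex^'n^'n \<Rightarrow> complex^'n^'n \<Rightarrow> real" where
  "sqrt_fidelity \<rho> \<sigma> = Re (trace (msqrt (msqrt \<rho> ** \<sigma> ** msqrt \<rho>)))"

definition ctrl_op :: "'a::finite \<Rightarrow> complex^'r::finite^'r \<Rightarrow> complex^('a \<times> 'r)^('a \<times> 'r)" where
  "ctrl_op i U = (\<chi> a b. if fst a = fst b then (if fst a = i then U $ snd a $ snd b else (if snd a = snd b then 1 else 0)) else 0)"

definition proj_i :: "'a::finite \<Rightarrow> complex^('a \<times> 'r::finite)^('a \<times> 'r)" where
  "proj_i i = (\<chi> a b. if fst a = i \<and> fst b = i \<and> snd a = snd b then 1 else 0)"

definition chan :: "'a::finite \<Rightarrow> complex^'r::finite^'r \<Rightarrow> real \<Rightarrow> complex^('a \<times> 'r)^('a \<times> 'r) \<Rightarrow> complex^('a \<times> 'r)^('a \<times> 'r)" where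
  "chan i U p \<rho> = (1 - p) *\<^sub>R \<rho> + p *\<^sub>R (ctrl_op i U ** \<rho> ** adj (ctrl_op i U))"

end

theory Submission
  imports Defs
begin

lemma adj_nth[simp]: "adj A $ i $ j = cnj (A $ j $ i)"
  by (simp add: adj_def)

lemma adj_adj[simp]: "adj (adj A) = A"
  by (simp add: adj_def vec_eq_iff)

lemma adj_mult: "adj (A ** B) = adj B ** adj A"
  by (simp add: vec_eq_iff matrix_matrix_mult_def mult.commute)

lemma adj_add: "adj (A + B) = adj A + adj B"
  by (simp add: vec_eq_iff)

lemma adj_diff: "adj (A - B) = adj A - adj B"
  by (simp add: vec_eq_iff)

lemma adj_scaleR: "adj (c *\<^sub>R A) = c *\<^sub>R adj A"
  by (simp add: vec_eq_iff complex_cnj_scaleR)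


lemma adj_one[simp]: "adj (mat 1) = mat 1"
  by (simp add: vec_eq_iff mat_def)

lemma cinner_adj: "cinner u (A *v v) = cinner (adj A *v u) v"
  unfolding cinner_def matrix_vector_mult_def
  by (simp add: sum_distrib_left sum_distrib_right mult_ac, subst sum.swap, simp)

lemma cinner_adj': "cinner (A *v u) v = cinner u (adj A *v v)"
  by (simp add: cinner_adj)

lemma cinner_commute: "cinner v u = cnj (cinner u v)"
  by (simp add: cinner_def mult.commute)

lemma cinner_add_right: "cinner u (v + w) = cinner u v + cinner u w"
  by (simp add: cinner_def algebra_simps sum.distrib)
lemma cinner_add_left: "cinner (v + w) u = cinner v u + cinner w u"
  by (simp add: cinner_def algebra_simps sum.distrib)
lemma cinner_diff_right: "cinner u (v - w) = cinner u v - cinner u w"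
  by (simp add: cinner_def algebra_simps sum_subtractf)
lemma cinner_diff_left: "cinner (v - w) u = cinner v u - cinner w u"
  by (simp add: cinner_def algebra_simps sum_subtractf)
lemma cinner_scale_right: "cinner u (c *s v) = c * cinner u v"
  by (simp add: cinner_def sum_distrib_left mult_ac)
lemma cinner_scale_left: "cinner (c *s u) v = cnj c * cinner u v"
  by (simp add: cinner_def sum_distrib_left mult_ac)
lemma cinner_scaleR_right: "cinner u (c *\<^sub>R v) = of_real c * cinner u v"
  unfolding cinner_def vector_scaleR_component by (simp add: sum_distrib_left mult_ac scaleR_conv_of_real)
lemma cinner_scaleR_left: "cinner (c *\<^sub>R u) v = of_real c * cinner u v"
  unfolding cinner_def vector_scaleR_component by (simp add: sum_distrib_left mult_ac scaleR_conv_of_real)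
lemma cinner_zero_left[simp]: "cinner 0 v = 0" by (simp add: cinner_def)
lemma cinner_zero_right[simp]: "cinner v 0 = 0" by (simp add: cinner_def)

lemma Re_cinner: "Re (cinner u v) = inner u v"
  by (simp add: cinner_def inner_vec_def Re_sum inner_complex_def)

lemma cinner_self: "cinner u u = of_real (norm u ^ 2)"
proof -
  have "cinner u u = (\<Sum>i\<in>UNIV. of_real (cmod (u $ i) ^ 2))"
    unfolding cinner_def by (intro sum.cong refl) (metis complex_norm_square mult.commute of_real_power)
  also have "\<dots> = of_real (\<Sum>i\<in>UNIV. (cmod (u $ i) ^ 2))" by simp
  also have "\<dots> = of_real (norm u ^ 2)" by (simp add: norm_vec_def L2_set_def sum_nonneg)
  finally show ?thesis .
qed

lemma cinner_self_Re: "Re (cinner u u) = norm u ^ 2" by (simp add: cinner_self)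

lemma mat_mult_vec_axis: "(A *v axis j 1) $ i = A $ i $ j"
proof -
  have eq: "(\<lambda>k. A $ i $ k * axis j 1 $ k) = (\<lambda>k. if k = j then A $ i $ k else 0)"
    by (auto simp: axis_def)
  show ?thesis unfolding matrix_vector_mult_def vec_lambda_beta eq by simp
qed

lemma cinner_axis: "cinner (axis i 1) v = v $ i"
proof -
  have eq: "(\<lambda>j. cnj (axis i 1 $ j) * v $ j) = (\<lambda>j. if j = i then v $ j else 0)"
    by (auto simp: axis_def)
  show ?thesis unfolding cinner_def eq by simp
qed

lemma matrix_eq_cinner: assumes "\<And>u v. cinner u (A *v v) = cinner u (B *v v)" shows "A = B"
proof -
  have "A $ i $ j = B $ i $ j" for i j
    using assms[of "axis i 1" "axis j 1"] by (simp add: cinner_axis mat_mult_vec_axis)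
  then show ?thesis by (simp add: vec_eq_iff)
qed

lemma hermitian_form_real: assumes "hermitian A" shows "Im (cinner v (A *v v)) = 0"
proof -
  have "cinner v (A *v v) = cinner (A *v v) v" using assms
    by (simp add: cinner_adj hermitian_def)
  also have "\<dots> = cnj (cinner v (A *v v))" by (rule cinner_commute)
  finally show ?thesis by (metis Reals_cnj_iff complex_is_Real_iff)
qed

lemma psdI: assumes "hermitian A" "\<And>v. Re (cinner v (A *v v)) \<ge> 0" shows "psd A"
  using assms hermitian_form_real unfolding psd_def by blast

lemma psd_hermitian: "psd A \<Longrightarrow> hermitian A" by (simp add: psd_def)
lemma psd_form: "psd A \<Longrightarrow> Re (cinner v (A *v v)) \<ge> 0" by (simp add: psd_def)

lemma matrix_add_rdistrib': "((B + C) ** A) = (B ** A) + (C ** A)"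
  by (simp add: matrix_matrix_mult_def vec_eq_iff distrib_right sum.distrib)
lemma matrix_diff_rdistrib': "((B - C) ** (A::'a::ring_1^'n^'m)) = (B ** A) - (C ** A)"
  by (simp add: matrix_matrix_mult_def vec_eq_iff left_diff_distrib sum_subtractf)
lemma matrix_diff_ldistrib': "((A::'a::ring_1^'n^'m) ** (B - C)) = (A ** B) - (A ** C)"
  by (simp add: matrix_matrix_mult_def vec_eq_iff right_diff_distrib sum_subtractf)
lemma matrix_scaleR_left: "((c *\<^sub>R B) ** (A::'a::real_algebra_1^'n^'m)) = c *\<^sub>R (B ** A)"
  by (simp add: matrix_matrix_mult_def vec_eq_iff scaleR_sum_right)
lemma matrix_scaleR_right: "((A::'a::real_algebra_1^'n^'m) ** (c *\<^sub>R B)) = c *\<^sub>R (A ** B)"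
  by (simp add: matrix_matrix_mult_def vec_eq_iff scaleR_sum_right)
lemma cnj_mult_self: "cnj z * z = complex_of_real (cmod z ^ 2)"
  by (metis complex_norm_square mult.commute of_real_power)
lemma mult_cnj_self: "z * cnj z = complex_of_real (cmod z ^ 2)"
  by (metis complex_norm_square of_real_power)

definition diagm :: "('n::finite \<Rightarrow> complex) \<Rightarrow> complex^'n^'n" where
  "diagm a = (\<chi> i j. if i = j then a i else 0)"

definition fc :: "complex^'n^'n \<Rightarrow> ('n::finite \<Rightarrow> complex) \<Rightarrow> complex^'n^'n" where
  "fc V a = V ** diagm a ** adj V"

lemma diagm_mult: fixes a b :: "'n::finite \<Rightarrow> complex" shows "diagm a ** diagm b = diagm (\<lambda>j. a j * b j)"
proof -
  have "(\<Sum>k\<in>UNIV. (if i = k then a i else 0) * (if k = j then b k else 0)) =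
        (if i = j then a i * b i else 0)" for i j :: 'n
  proof -
    have eq: "(\<lambda>k. (if i = k then a i else 0) * (if k = j then b k else 0)) =
          (\<lambda>k. if k = i then (if i = j then a i * b i else 0) else 0)" by auto
    show ?thesis unfolding eq by simp
  qed
  then show ?thesis by (simp add: diagm_def matrix_matrix_mult_def vec_eq_iff)
qed

lemma adj_diagm: "adj (diagm a) = diagm (\<lambda>j. cnj (a j))"
  by (auto simp: diagm_def vec_eq_iff)

lemma diagm_one: "diagm (\<lambda>_. 1) = mat 1"
  by (simp add: diagm_def mat_def vec_eq_iff)

lemma diagm_add: "diagm a + diagm b = diagm (\<lambda>j. a j + b j)"
  by (simp add: diagm_def vec_eq_iff)

lemma diagm_diff: "diagm a - diagm b = diagm (\<lambda>j. a j - b j)"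
  by (simp add: diagm_def vec_eq_iff)

lemma diagm_scaleR: "c *\<^sub>R diagm a = diagm (\<lambda>j. c *\<^sub>R a j)"
  by (simp add: diagm_def vec_eq_iff)

lemma trace_diagm: "trace (diagm a) = sum a UNIV"
  by (simp add: diagm_def trace_def)

lemma diagm_vec: "(diagm a *v x) $ j = a j * x $ j"
proof -
  have eq: "(\<lambda>k. diagm a $ j $ k * x $ k) = (\<lambda>k. if k = j then a j * x $ j else 0)"
    by (auto simp: diagm_def)
  show ?thesis unfolding matrix_vector_mult_def vec_lambda_beta eq by simp
qed

lemma unitaryD1: "unitary V \<Longrightarrow> adj V ** V = mat 1" by (simp add: unitary_def)
lemma unitaryD2: "unitary V \<Longrightarrow> V ** adj V = mat 1" by (simp add: unitary_def)

lemma fc_mult: assumes "unitary V" shows "fc V a ** fc V b = fc V (\<lambda>j. a j * b j)"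
proof -
  have "fc V a ** fc V b = V ** diagm a ** (adj V ** V) ** diagm b ** adj V"
    by (simp add: fc_def matrix_mul_assoc)
  also have "\<dots> = V ** (diagm a ** diagm b) ** adj V"
    using assms by (simp add: unitary_def matrix_mul_assoc)
  finally show ?thesis by (simp add: diagm_mult fc_def)
qed

lemma fc_add: "fc V a + fc V b = fc V (\<lambda>j. a j + b j)"
  by (simp add: fc_def matrix_add_ldistrib matrix_add_rdistrib' flip: diagm_add)

lemma fc_diff: "fc V a - fc V b = fc V (\<lambda>j. a j - b j)"
  by (simp add: fc_def matrix_diff_ldistrib' matrix_diff_rdistrib' flip: diagm_diff)

lemma fc_one: assumes "unitary V" shows "fc V (\<lambda>_. 1) = mat 1"
  using assms by (simp add: fc_def diagm_one unitary_def)

lemma adj_fc: "adj (fc V a) = fc V (\<lambda>j. cnj (a j))"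
  by (simp add: fc_def adj_mult adj_diagm matrix_mul_assoc)

lemma trace_fc: assumes "unitary V" shows "trace (fc V a) = sum a UNIV"
proof -
  have "trace (fc V a) = trace ((diagm a ** adj V) ** V)"
    unfolding fc_def by (metis matrix_mul_assoc trace_mul_sym)
  also have "\<dots> = trace (diagm a)"
    using assms by (simp add: unitary_def flip: matrix_mul_assoc)
  finally show ?thesis by (simp add: trace_diagm)
qed

lemma unitary_norm: assumes "unitary V" shows "cinner (adj V *v u) (adj V *v u) = cinner u u"
  using assms by (simp add: cinner_adj' matrix_vector_mul_assoc unitary_def)

lemma unitary_norm': assumes "unitary V" shows "cinner (V *v u) (V *v u) = cinner u u"
  using assms by (simp add: cinner_adj' matrix_vector_mul_assoc unitary_def)

lemma fc_form: "cinner u (fc V a *v u) = (\<Sum>j\<in>UNIV. a j * of_real (cmod ((adj V *v u) $ j) ^ 2))"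
proof -
  define y where "y = adj V *v u"
  have "cinner u (fc V a *v u) = cinner y (diagm a *v y)"
    by (simp add: fc_def y_def cinner_adj flip: matrix_vector_mul_assoc)
  also have "\<dots> = (\<Sum>j\<in>UNIV. a j * of_real (cmod (y $ j) ^ 2))"
    unfolding cinner_def diagm_vec
  proof (intro sum.cong refl)
    fix j
    have "cnj (y $ j) * (a j * y $ j) = a j * (cnj (y $ j) * y $ j)" by (simp add: mult_ac)
    then show "cnj (y $ j) * (a j * y $ j) = a j * complex_of_real (cmod (y $ j) ^ 2)"
      by (simp only: cnj_mult_self)
  qed
  finally show ?thesis by (simp add: y_def)
qed

lemma sum_cmod_unitary: assumes "unitary V"
  shows "(\<Sum>j\<in>UNIV. cmod ((adj V *v u) $ j) ^ 2) = norm u ^ 2"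
proof -
  have "complex_of_real (\<Sum>j\<in>UNIV. cmod ((adj V *v u) $ j) ^ 2) = cinner (adj V *v u) (adj V *v u)"
    unfolding cinner_def by (simp add: cnj_mult_self)
  also have "\<dots> = of_real (norm u ^ 2)" by (subst unitary_norm[OF assms]) (rule cinner_self)
  finally show ?thesis using of_real_eq_iff by blast
qed

lemma ortho_exists:
  fixes K :: "(complex^'n::finite) set"
  assumes "finite K" "card K < CARD('n)"
  shows "\<exists>v. norm v = 1 \<and> (\<forall>k\<in>K. cinner k v = 0)"
proof -
  define S where "S = K \<union> (\<lambda>k. \<i> *s k) ` K"
  have fS: "finite S" using assms by (simp add: S_def)
  have "card S \<le> card K + card ((\<lambda>k. \<i> *s k) ` K)" unfolding S_def by (rule card_Un_le)
  also have "\<dots> \<le> 2 * card K" using card_image_le[OF assms(1), of "\<lambda>k. \<i> *s k"] by simp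
  finally have "card S < DIM(complex^'n)" using assms by simp
  then have dS: "dim S < DIM(complex^'n)" using dim_le_card'[OF fS] by linarith
  obtain x :: "complex^'n" where x: "x \<noteq> 0" "\<And>y. y \<in> span S \<Longrightarrow> orthogonal x y"
    using orthogonal_to_subspace_exists[OF dS] by blast
  have "cinner k x = 0" if "k \<in> K" for k
  proof -
    have "inner x k = 0" using x(2)[of k] that by (simp add: S_def span_base orthogonal_def)
    then have r: "Re (cinner k x) = 0" by (simp add: Re_cinner inner_commute)
    have "inner x (\<i> *s k) = 0" using x(2)[of "\<i> *s k"] that by (simp add: S_def span_base orthogonal_def)
    then have "Re (cinner (\<i> *s k) x) = 0" by (simp add: Re_cinner inner_commute)
    then have "Im (cinner k x) = 0" by (simp add: cinner_scale_left)
    with r show ?thesis by (simp add: complex_eq_iff)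
  qed
  then show ?thesis using x(1)
    by (intro exI[of _ "(1 / norm x) *\<^sub>R x"]) (simp add: cinner_scaleR_right)
qed

lemma mv_scaleR: "(A::complex^'n^'m) *v (c *\<^sub>R x) = c *\<^sub>R (A *v x)"
  by (simp add: matrix_vector_mult_def vec_eq_iff scaleR_sum_right)

lemma cont_cinner: "continuous_on S (\<lambda>v::complex^'n::finite. cinner k v)"
  unfolding cinner_def by (intro continuous_intros)

lemma cont_form: "continuous_on S (\<lambda>v::complex^'n::finite. Re (cinner v (A *v v)))"
  unfolding cinner_def matrix_vector_mult_def by (intro continuous_intros)

lemma eigen_exists:
  fixes A :: "complex^'n::finite^'n" and K :: "(complex^'n) set"
  assumes herm: "hermitian A" and fin: "finite K" and card: "card K < CARD('n)"
    and inv: "\<forall>k\<in>K. \<exists>c::real. A *v k = c *\<^sub>R k"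
  shows "\<exists>v (c::real). norm v = 1 \<and> (\<forall>k\<in>K. cinner k v = 0) \<and> A *v v = c *\<^sub>R v"
proof -
  define S where "S = (\<Inter>k\<in>K. {v. cinner k v = 0})"
  define f where "f v = Re (cinner v (A *v v))" for v
  have adjA: "adj A = A" using herm by (simp add: hermitian_def)
  have S_add: "v + w \<in> S" if "v \<in> S" "w \<in> S" for v w
    using that by (simp add: S_def cinner_add_right)
  have S_scale: "c *\<^sub>R v \<in> S" if "v \<in> S" for v c
    using that by (simp add: S_def cinner_scaleR_right)
  have S_A: "A *v v \<in> S" if "v \<in> S" for v
  proof -
    have "cinner k (A *v v) = 0" if "k \<in> K" for k
    proof -
      obtain c :: real where c: "A *v k = c *\<^sub>R k" using inv \<open>k \<in> K\<close> by blast
      have "cinner k (A *v v) = cinner (A *v k) v" by (simp add: cinner_adj adjA)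
      also have "\<dots> = 0" using \<open>v \<in> S\<close> \<open>k \<in> K\<close> by (simp add: c cinner_scaleR_left S_def)
      finally show ?thesis .
    qed
    then show ?thesis by (simp add: S_def)
  qed
  have clS: "closed S" unfolding S_def
    by (intro closed_INT ballI closed_Collect_eq cont_cinner continuous_intros)
  define T where "T = S \<inter> sphere 0 1"
  have cT: "compact T" unfolding T_def by (intro closed_Int_compact clS compact_sphere)
  obtain v0 where v0: "norm v0 = 1" "\<forall>k\<in>K. cinner k v0 = 0" using ortho_exists[OF fin card] by blast
  have "v0 \<in> T" using v0 by (simp add: T_def S_def)
  then have neT: "T \<noteq> {}" by blast
  have cf: "continuous_on T f" unfolding f_def by (rule cont_form)
  obtain v where vT: "v \<in> T" and vmax: "\<forall>y\<in>T. f y \<le> f v"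
    using continuous_attains_sup[OF cT neT cf] by blast
  define l where "l = f v"
  have vS: "v \<in> S" and nv: "norm v = 1" using vT by (auto simp: T_def)
  have fscale: "f (c *\<^sub>R x) = c^2 * f x" for c x
    by (simp add: f_def mv_scaleR cinner_scaleR_left cinner_scaleR_right power2_eq_square)
  have bound: "f x \<le> l * norm x ^ 2" if "x \<in> S" for x
  proof (cases "x = 0")
    case True then show ?thesis by (simp add: f_def)
  next
    case False
    define y where "y = (1 / norm x) *\<^sub>R x"
    have "y \<in> T" using False that S_scale by (simp add: y_def T_def)
    then have "f y \<le> l" using vmax l_def by blast
    moreover have "f y = f x / norm x ^ 2" by (simp add: y_def fscale power_divide)
    ultimately show ?thesis using False by (simp add: field_simps)
  qed
  have vv: "cinner v v = 1" using nv by (simp add: cinner_self)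
  have fv: "cinner v (A *v v) = of_real l"
    using hermitian_form_real[OF herm, of v] by (simp add: l_def f_def complex_eq_iff)
  define w where "w = A *v v - l *\<^sub>R v"
  have wS: "w \<in> S" unfolding w_def using S_add[OF S_A[OF vS] S_scale[OF vS, of "-l"]]
    by (simp add: scaleR_left.minus)
  have vw: "cinner v w = 0" by (simp add: w_def cinner_diff_right cinner_scaleR_right fv vv)
  have wv: "cinner w v = 0" using vw by (simp add: cinner_commute[of w v])
  define n where "n = norm w ^ 2"
  have ww: "cinner w w = of_real n" by (simp add: n_def cinner_self)
  have wAv: "cinner w (A *v v) = of_real n"
  proof -
    have "A *v v = w + l *\<^sub>R v" by (simp add: w_def)
    then show ?thesis by (simp add: cinner_add_right cinner_scaleR_right ww wv)
  qed
  have vAw: "cinner v (A *v w) = of_real n"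
  proof -
    have "cinner v (A *v w) = cinner (A *v v) w" by (simp add: cinner_adj adjA)
    also have "A *v v = w + l *\<^sub>R v" by (simp add: w_def)
    finally show ?thesis by (simp add: cinner_add_left cinner_scaleR_left ww vw)
  qed
  have key: "2 * t * n \<le> t^2 * (l * n - f w)" if "t > 0" for t
  proof -
    define x where "x = v + t *\<^sub>R w"
    have xS: "x \<in> S" unfolding x_def by (intro S_add vS S_scale wS)
    have ex: "cinner x (A *v x) = cinner v (A *v v) + of_real t * cinner v (A *v w)
        + of_real t * cinner w (A *v v) + of_real t * of_real t * cinner w (A *v w)"
      by (simp add: x_def cinner_add_left cinner_add_right cinner_scaleR_left
          cinner_scaleR_right matrix_vector_right_distrib mv_scaleR algebra_simps)
    have fx: "f x = l + 2 * t * n + t^2 * f w"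
      unfolding f_def ex fv vAw wAv by (simp add: f_def power2_eq_square)
    have ex2: "cinner x x = cinner v v + of_real t * cinner v w + of_real t * cinner w v
        + of_real t * of_real t * cinner w w"
      by (simp add: x_def cinner_add_left cinner_add_right cinner_scaleR_left
          cinner_scaleR_right algebra_simps)
    have "norm x ^ 2 = Re (cinner x x)" by (simp add: cinner_self)
    also have "\<dots> = 1 + t^2 * n" unfolding ex2 vv vw wv ww by (simp add: power2_eq_square)
    finally have nx: "norm x ^ 2 = 1 + t^2 * n" .
    have "f x \<le> l * norm x ^ 2" by (rule bound[OF xS])
    then show ?thesis unfolding fx nx by (simp add: algebra_simps)
  qed
  have "n = 0"
  proof (rule ccontr)
    assume "n \<noteq> 0"
    then have npos: "n > 0" by (simp add: n_def)
    define M where "M = l * n - f w"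
    define t where "t = n / (\<bar>M\<bar> + 1)"
    have tpos: "t > 0" using npos by (simp add: t_def)
    have "2 * t * n \<le> t^2 * M" using key[OF tpos] by (simp add: M_def)
    then have "2 * n \<le> t * M" using tpos by (simp add: power2_eq_square)
    also have "t * M \<le> t * \<bar>M\<bar>" using tpos by (simp add: mult_left_mono)
    also have "t * \<bar>M\<bar> < n" using npos by (simp add: t_def field_simps)
    finally show False using npos by simp
  qed
  then have "w = 0" by (simp add: n_def)
  then have "A *v v = l *\<^sub>R v" by (simp add: w_def)
  moreover have "\<forall>k\<in>K. cinner k v = 0" using vS by (simp add: S_def)
  ultimately show ?thesis using nv by blast
qed


definition orthon :: "'i set \<Rightarrow> ('i \<Rightarrow> complex^'n) \<Rightarrow> bool" where
  "orthon F f \<longleftrightarrow> (\<forall>j\<in>F. \<forall>k\<in>F. cinner (f j) (f k) = (if j = k then 1 else 0))"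

lemma orthon_insert:
  assumes "orthon F f" "norm v = 1" "\<forall>k\<in>f ` F. cinner k v = 0" "x \<notin> F"
  shows "orthon (insert x F) (f(x := v))"
proof -
  have vv: "cinner v v = 1" using assms(2) by (simp add: cinner_self)
  have a: "cinner (f j) v = 0" if "j \<in> F" for j using assms(3) that by blast
  have b: "cinner v (f j) = 0" if "j \<in> F" for j using a[OF that] by (simp add: cinner_commute[of v])
  show ?thesis using assms(1,4) a b vv unfolding orthon_def by auto
qed

lemma eigenbasis:
  fixes A :: "complex^'n::finite^'n"
  assumes herm: "hermitian A" and "finite F"
  shows "\<exists>f (d::'n\<Rightarrow>real). orthon F f \<and> (\<forall>j\<in>F. A *v f j = d j *\<^sub>R f j)"
  using assms(2)
proof (induction F rule: finite_induct)
  case empty then show ?case by (simp add: orthon_def)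
next
  case (insert x F)
  obtain f d where fd: "orthon F f" "\<forall>j\<in>F. A *v f j = d j *\<^sub>R f j" using insert.IH by blast
  have "F \<subset> UNIV" using insert.hyps(2) by blast
  then have "card F < CARD('n)" by (simp add: psubset_card_mono)
  then have cK: "card (f ` F) < CARD('n)" using card_image_le[OF insert.hyps(1), of f] by linarith
  have invK: "\<forall>k\<in>f ` F. \<exists>c::real. A *v k = c *\<^sub>R k" using fd(2) by blast
  obtain v c where v: "norm v = 1" "\<forall>k\<in>f ` F. cinner k v = 0" "A *v v = c *\<^sub>R v"
    using eigen_exists[OF herm finite_imageI[OF insert.hyps(1)] cK invK] by blast
  have "orthon (insert x F) (f(x := v))" by (rule orthon_insert[OF fd(1) v(1,2) insert.hyps(2)])
  moreover have "\<forall>j\<in>insert x F. A *v (f(x := v)) j = (d(x := c)) j *\<^sub>R (f(x := v)) j"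
    using fd(2) v(3) insert.hyps(2) by auto
  ultimately show ?case by blast
qed

lemma ortho_extend_aux:
  fixes g :: "'n::finite \<Rightarrow> complex^'n"
  assumes "finite G" "orthon F g" "F \<inter> G = {}"
  shows "\<exists>g'. (\<forall>j\<in>F. g' j = g j) \<and> orthon (F \<union> G) g'"
  using assms(1,3)
proof (induction G rule: finite_induct)
  case empty then show ?case using assms(2) by auto
next
  case (insert x G)
  obtain g' where g': "\<forall>j\<in>F. g' j = g j" "orthon (F \<union> G) g'" using insert by auto
  have xn: "x \<notin> F \<union> G" using insert by auto
  then have "F \<union> G \<subset> UNIV" by blast
  then have "card (F \<union> G) < CARD('n)" by (simp add: psubset_card_mono)
  then have cK: "card (g' ` (F \<union> G)) < CARD('n)"
    using card_image_le[of "F \<union> G" g'] by (simp add: le_less_trans)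
  obtain v where v: "norm v = 1" "\<forall>k\<in>g' ` (F \<union> G). cinner k v = 0"
    using ortho_exists[OF _ cK] by auto
  have "orthon (insert x (F \<union> G)) (g'(x := v))" by (rule orthon_insert[OF g'(2) v xn])
  moreover have "\<forall>j\<in>F. (g'(x := v)) j = g j" using g'(1) xn by auto
  ultimately have "\<exists>g''. (\<forall>j\<in>F. g'' j = g j) \<and> orthon (insert x (F \<union> G)) g''" by blast
  then show ?case by simp
qed

lemma ortho_extend:
  fixes g :: "'n::finite \<Rightarrow> complex^'n"
  assumes "orthon F g"
  shows "\<exists>g'. (\<forall>j\<in>F. g' j = g j) \<and> orthon UNIV g'"
  using ortho_extend_aux[OF _ assms, of "UNIV - F"] by (metis Diff_disjoint Un_Diff_cancel finite sup_top_right)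

definition colmat :: "('n \<Rightarrow> complex^'m) \<Rightarrow> complex^'n^'m" where
  "colmat f = (\<chi> i j. f j $ i)"

lemma colmat_unitary: assumes "orthon UNIV (f :: 'n::finite \<Rightarrow> complex^'n)" shows "unitary (colmat f)"
proof -
  have "adj (colmat f) ** colmat f = mat 1"
    using assms by (simp add: orthon_def colmat_def matrix_matrix_mult_def cinner_def vec_eq_iff mat_def)
  then show ?thesis using matrix_left_right_inverse unitary_def by blast
qed

lemma mult_diagm_right: "V ** diagm a = (\<chi> i j. V $ i $ j * a j)"
proof -
  have "(\<Sum>k\<in>UNIV. V $ i $ k * (if k = j then a k else 0)) = V $ i $ j * a j" for i j
  proof -
    have eq: "(\<lambda>k. V $ i $ k * (if k = j then a k else 0)) = (\<lambda>k. if k = j then V $ i $ j * a j else 0)" by auto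
    show ?thesis unfolding eq by simp
  qed
  then show ?thesis by (simp add: diagm_def matrix_matrix_mult_def vec_eq_iff)
qed

theorem spectral:
  fixes A :: "complex^'n::finite^'n"
  assumes herm: "hermitian A"
  shows "\<exists>V (d::'n\<Rightarrow>real). unitary V \<and> A = fc V (\<lambda>j. of_real (d j))"
proof -
  obtain f and d :: "'n \<Rightarrow> real" where fd: "orthon UNIV f" "\<forall>j. A *v f j = d j *\<^sub>R f j"
    using eigenbasis[OF herm, of UNIV] by auto
  define V where "V = colmat f"
  have U: "unitary V" unfolding V_def by (rule colmat_unitary[OF fd(1)])
  have "(A ** V) $ i $ j = (V ** diagm (\<lambda>j. of_real (d j))) $ i $ j" for i j
  proof -
    have "(A ** V) $ i $ j = (A *v f j) $ i"
      by (simp add: V_def colmat_def matrix_matrix_mult_def matrix_vector_mult_def)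
    also have "\<dots> = of_real (d j) * f j $ i"
      by (simp only: fd(2) vector_scaleR_component) (simp add: scaleR_conv_of_real)
    finally show ?thesis by (simp add: mult_diagm_right V_def colmat_def mult.commute)
  qed
  then have AV: "A ** V = V ** diagm (\<lambda>j. of_real (d j))" by (simp add: vec_eq_iff)
  have "A = A ** (V ** adj V)" using U by (simp add: unitary_def)
  also have "\<dots> = fc V (\<lambda>j. of_real (d j))" by (simp add: matrix_mul_assoc AV fc_def)
  finally show ?thesis using U by blast
qed

lemma fc_form_real: "Re (cinner u (fc V (\<lambda>j. of_real (r j)) *v u)) = (\<Sum>j\<in>UNIV. r j * cmod ((adj V *v u) $ j) ^ 2)"
  by (simp add: fc_form Re_sum)

lemma fc_real_hermitian: "hermitian (fc V (\<lambda>j. of_real (r j)))"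
  by (simp add: hermitian_def adj_fc)

lemma psd_fc: assumes "\<And>j. r j \<ge> 0" shows "psd (fc V (\<lambda>j. of_real (r j)))"
  by (rule psdI[OF fc_real_hermitian]) (simp add: fc_form_real assms sum_nonneg)

lemma adj_V_col: assumes "unitary V" shows "adj V *v (V *v x) = x"
  using assms by (simp add: matrix_vector_mul_assoc unitary_def)

lemma psd_spectral:
  fixes A :: "complex^'n::finite^'n"
  assumes "psd A"
  shows "\<exists>V (r::'n\<Rightarrow>real). unitary V \<and> (\<forall>j. r j \<ge> 0) \<and> A = fc V (\<lambda>j. of_real (r j))"
proof -
  obtain V and r :: "'n \<Rightarrow> real" where V: "unitary V" "A = fc V (\<lambda>j. of_real (r j))"
    using spectral[OF psd_hermitian[OF assms]] by blast
  have "r j \<ge> 0" for j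
  proof -
    have "0 \<le> Re (cinner (V *v axis j 1) (A *v (V *v axis j 1)))" using assms by (rule psd_form)
    also have "\<dots> = (\<Sum>k\<in>UNIV. r k * cmod (axis j 1 $ k) ^ 2)"
      by (simp add: V(2) fc_form_real adj_V_col[OF V(1)])
    also have "\<dots> = r j"
    proof -
      have eq: "(\<lambda>k. r k * cmod (axis j 1 $ k) ^ 2) = (\<lambda>k. if k = j then r j else 0)"
        by (auto simp: axis_def)
      show ?thesis unfolding eq by simp
    qed
    finally show ?thesis .
  qed
  then show ?thesis using V by blast
qed

lemma psd_kernel:
  assumes "psd B" "Re (cinner w (B *v w)) = 0"
  shows "B *v w = 0"
proof -
  obtain V r where V: "unitary V" "\<forall>j. r j \<ge> 0" "B = fc V (\<lambda>j. of_real (r j))"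
    using psd_spectral[OF assms(1)] by blast
  define y where "y = adj V *v w"
  have "(\<Sum>j\<in>UNIV. r j * cmod (y $ j) ^ 2) = 0"
    using assms(2) by (simp add: V(3) fc_form_real y_def)
  then have "\<forall>j\<in>UNIV. r j * cmod (y $ j) ^ 2 = 0"
    by (subst sum_nonneg_eq_0_iff[symmetric]) (auto simp: V(2))
  then have z: "of_real (r j) * y $ j = 0" for j by auto
  have "diagm (\<lambda>j. of_real (r j)) *v y = 0" by (simp add: vec_eq_iff diagm_vec z)
  then show ?thesis by (simp add: V(3) fc_def y_def flip: matrix_vector_mul_assoc)
qed

lemma mult_diagm_left: "diagm a ** V = (\<chi> i j. a i * V $ i $ j)"
proof -
  have "(\<Sum>k\<in>UNIV. (if i = k then a i else 0) * V $ k $ j) = a i * V $ i $ j" for i j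
  proof -
    have eq: "(\<lambda>k. (if i = k then a i else 0) * V $ k $ j) = (\<lambda>k. if k = i then a i * V $ i $ j else 0)" by auto
    show ?thesis unfolding eq by simp
  qed
  then show ?thesis by (simp add: diagm_def matrix_matrix_mult_def vec_eq_iff)
qed

lemma hermitian_zero_form:
  assumes "hermitian E" "\<And>u. E *v (E *v u) = 0" shows "E = 0"
proof -
  have "E *v u = 0" for u
  proof -
    have "cinner (E *v u) (E *v u) = cinner u (E *v (E *v u))"
      using assms(1) by (simp add: cinner_adj hermitian_def)
    then have "norm (E *v u) ^ 2 = 0" using assms(2) by (simp add: cinner_self)
    then show ?thesis by simp
  qed
  then show ?thesis by (simp add: matrix_eq)
qed

lemma psd_sqrt_unique:
  fixes B C :: "complex^'n::finite^'n"
  assumes B: "psd B" and C: "psd C" and BC: "B ** B = C ** C"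
  shows "B = C"
proof -
  obtain V b where V: "unitary V" "\<forall>j. b j \<ge> 0" "B = fc V (\<lambda>j. of_real (b j))"
    using psd_spectral[OF B] by blast
  define A where "A = B ** B"
  define D2 where "D2 = diagm (\<lambda>j. of_real (b j) * of_real (b j) :: complex)"
  define Db where "Db = diagm (\<lambda>j. of_real (b j) :: complex)"
  define M where "M = adj V ** C ** V"
  have A_fc: "A = V ** D2 ** adj V" unfolding A_def V(3) fc_mult[OF V(1)] by (simp add: fc_def D2_def)
  have VV1: "adj V ** V = mat 1" and VV2: "V ** adj V = mat 1" using V(1) by (auto simp: unitary_def)
  have VAV: "adj V ** A ** V = D2"
    unfolding A_fc by (simp add: matrix_mul_assoc VV1) (simp add: VV1 flip: matrix_mul_assoc)
  have CA: "C ** A = A ** C" unfolding A_def BC by (simp add: matrix_mul_assoc)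
  have Cfc: "C = V ** M ** adj V"
    unfolding M_def by (simp add: matrix_mul_assoc VV2) (simp add: VV2 flip: matrix_mul_assoc)
  have "M ** D2 = adj V ** (C ** A) ** V"
    unfolding M_def VAV[symmetric] by (simp add: matrix_mul_assoc VV2) (simp add: VV2 flip: matrix_mul_assoc)
  also have "\<dots> = adj V ** (A ** C) ** V" by (simp add: CA)
  also have "\<dots> = D2 ** M"
    unfolding M_def VAV[symmetric] by (simp add: matrix_mul_assoc VV2) (simp add: VV2 flip: matrix_mul_assoc)
  finally have MD2: "M ** D2 = D2 ** M" .
  have "M $ i $ j * of_real (b j) = of_real (b i) * M $ i $ j" for i j
  proof -
    have e: "M $ i $ j * (of_real (b j) * of_real (b j)) = (of_real (b i) * of_real (b i)) * M $ i $ j"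
      using MD2 unfolding D2_def mult_diagm_right mult_diagm_left by (simp add: vec_eq_iff)
    show ?thesis
    proof (cases "M $ i $ j = 0")
      case False
      then have "b j * b j = b i * b i" using e by (simp flip: of_real_mult)
      then have "b j = b i" using V(2) by (metis abs_of_nonneg real_sqrt_abs2 power2_eq_square real_sqrt_abs)
      then show ?thesis by (simp add: mult.commute)
    qed simp
  qed
  then have MDb: "M ** Db = Db ** M" unfolding Db_def mult_diagm_right mult_diagm_left by (simp add: vec_eq_iff)
  have Bfc: "B = V ** Db ** adj V" by (simp add: V(3) fc_def Db_def)
  have CB: "C ** B = B ** C"
  proof -
    have "C ** B = V ** (M ** Db) ** adj V"
      unfolding Cfc Bfc by (simp add: matrix_mul_assoc VV1) (simp add: VV1 flip: matrix_mul_assoc)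
    also have "\<dots> = V ** (Db ** M) ** adj V" by (simp add: MDb)
    also have "\<dots> = B ** C"
      unfolding Cfc Bfc by (simp add: matrix_mul_assoc VV1) (simp add: VV1 flip: matrix_mul_assoc)
    finally show ?thesis .
  qed
  define E where "E = B - C"
  have hE: "hermitian E" using B C by (simp add: E_def hermitian_def adj_diff psd_def)
  have E0: "E ** (B + C) = 0"
    by (simp add: E_def matrix_add_ldistrib matrix_diff_rdistrib' BC CB)
  have "E *v (E *v u) = 0" for u
  proof -
    define w where "w = E *v u"
    have "cinner w ((B + C) *v w) = cinner u (E *v ((B + C) *v w))"
      using hE by (simp add: w_def cinner_adj hermitian_def)
    also have "\<dots> = 0" by (simp add: matrix_vector_mul_assoc matrix_mul_assoc E0 w_def)
    finally have h: "cinner w (B *v w) + cinner w (C *v w) = 0"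
      by (simp add: matrix_vector_mult_add_rdistrib cinner_add_right)
    have "Re (cinner w (B *v w) + cinner w (C *v w)) = 0" by (simp only: h) simp
    then have "Re (cinner w (B *v w)) + Re (cinner w (C *v w)) = 0" by simp
    moreover have "Re (cinner w (B *v w)) \<ge> 0" "Re (cinner w (C *v w)) \<ge> 0" using B C by (auto intro: psd_form)
    ultimately have "Re (cinner w (B *v w)) = 0" "Re (cinner w (C *v w)) = 0" by linarith+
    then have "B *v w = 0" "C *v w = 0" using psd_kernel B C by blast+
    moreover have "E *v w = B *v w - C *v w" by (simp add: E_def matrix_vector_mult_diff_rdistrib)
    ultimately show ?thesis by (simp add: w_def)
  qed
  then have "E = 0" using hermitian_zero_form[OF hE] by blast
  then show ?thesis by (simp add: E_def)
qed

lemma msqrt_eq: assumes "psd B" "B ** B = A" shows "msqrt A = B"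
  unfolding msqrt_def
proof (rule the_equality)
  show "psd B \<and> B ** B = A" using assms by blast
  fix C assume "psd C \<and> C ** C = A"
  then show "C = B" using psd_sqrt_unique assms by metis
qed

lemma msqrt_fc:
  assumes "unitary V" "\<And>j. r j \<ge> 0"
  shows "msqrt (fc V (\<lambda>j. of_real (r j))) = fc V (\<lambda>j. of_real (sqrt (r j)))"
proof (rule msqrt_eq)
  show "psd (fc V (\<lambda>j. of_real (sqrt (r j))))" by (rule psd_fc) (simp add: assms(2))
  show "fc V (\<lambda>j. of_real (sqrt (r j))) ** fc V (\<lambda>j. of_real (sqrt (r j))) = fc V (\<lambda>j. of_real (r j))"
  proof -
    have eq: "(\<lambda>j. complex_of_real (sqrt (r j)) * complex_of_real (sqrt (r j))) = (\<lambda>j. of_real (r j))"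
      by (rule ext) (simp add: assms(2) flip: of_real_mult)
    show ?thesis unfolding fc_mult[OF assms(1)] eq ..
  qed
qed

lemma msqrt_psd: assumes "psd A" shows "psd (msqrt A)" "msqrt A ** msqrt A = A"
proof -
  obtain V r where V: "unitary V" "\<forall>j. r j \<ge> 0" "A = fc V (\<lambda>j. of_real (r j))"
    using psd_spectral[OF assms] by blast
  have m: "msqrt A = fc V (\<lambda>j. of_real (sqrt (r j)))" by (simp add: V(3) msqrt_fc[OF V(1)] V(2))
  show "psd (msqrt A)" unfolding m by (rule psd_fc) (simp add: V(2))
  have eq: "(\<lambda>j. complex_of_real (sqrt (r j)) * complex_of_real (sqrt (r j))) = (\<lambda>j. of_real (r j))"
    by (rule ext) (simp add: V(2) flip: of_real_mult)
  show "msqrt A ** msqrt A = A" unfolding m fc_mult[OF V(1)] eq by (simp add: V(3))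
qed

definition blockpsd :: "complex^'n^'n \<Rightarrow> complex^'n^'n \<Rightarrow> complex^'n^'n \<Rightarrow> bool" where
  "blockpsd \<rho> X \<sigma> \<longleftrightarrow> (\<forall>u v. 0 \<le> Re (cinner u (\<rho> *v u)) + 2 * Re (cinner u (X *v v)) + Re (cinner v (\<sigma> *v v)))"

lemma disc:
  fixes a b c :: real
  assumes "\<forall>t. 0 \<le> t^2 * a - 2 * t * c + b" "a \<ge> 0" "c \<ge> 0"
  shows "c^2 \<le> a * b"
proof (cases "a = 0")
  case True
  show ?thesis
  proof (rule ccontr)
    assume "\<not> ?thesis"
    then have "c > 0" using True assms(3) by (simp add: less_le)
    then show False using assms(1)[rule_format, of "(b + 1) / (2 * c)"] True by (simp add: field_simps)
  qed
next
  case False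
  then have "a > 0" using assms(2) by simp
  have "0 \<le> (c / a)^2 * a - 2 * (c / a) * c + b" using assms(1) by blast
  also have "\<dots> = b - c^2 / a" using \<open>a > 0\<close> by (simp add: field_simps power2_eq_square)
  finally show ?thesis using \<open>a > 0\<close> by (simp add: field_simps)
qed

lemma mv_scale: "(A::complex^'n^'m) *v (s *s x) = s *s (A *v x)"
  by (simp add: matrix_vector_mult_def vec_eq_iff sum_distrib_left mult_ac)

lemma blockpsd_Q1: "blockpsd \<rho> X \<sigma> \<Longrightarrow> Re (cinner u (\<rho> *v u)) \<ge> 0"
  unfolding blockpsd_def by (drule spec[of _ u], drule spec[of _ 0]) simp

lemma blockpsd_Q2: "blockpsd \<rho> X \<sigma> \<Longrightarrow> Re (cinner v (\<sigma> *v v)) \<ge> 0"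
  unfolding blockpsd_def by (drule spec[of _ 0], drule spec[of _ v]) simp

lemma CS_sum:
  fixes I :: "'i set"
  assumes bp: "blockpsd \<rho> X \<sigma>" and fin: "finite I"
  shows "cmod (\<Sum>k\<in>I. cinner (u k) (X *v v k)) ^ 2
     \<le> (\<Sum>k\<in>I. Re (cinner (u k) (\<rho> *v u k))) * (\<Sum>k\<in>I. Re (cinner (v k) (\<sigma> *v v k)))"
proof -
  define c where "c = (\<Sum>k\<in>I. cinner (u k) (X *v v k))"
  define a where "a = (\<Sum>k\<in>I. Re (cinner (u k) (\<rho> *v u k)))"
  define b where "b = (\<Sum>k\<in>I. Re (cinner (v k) (\<sigma> *v v k)))"
  define z where "z = (if c = 0 then 1 else - c / of_real (cmod c))"
  have zc: "cnj z * c = - of_real (cmod c)"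
  proof (cases "c = 0")
    case False
    then have "cnj z * c = - (cnj c * c) / of_real (cmod c)" by (simp add: z_def)
    also have "\<dots> = - of_real (cmod c)" using False
      by (simp add: cnj_mult_self power2_eq_square)
    finally show ?thesis .
  qed (simp add: z_def)
  have zz: "cnj z * z = 1"
  proof (cases "c = 0")
    case False
    then have "cnj z * z = (cnj c * c) / (of_real (cmod c) * of_real (cmod c))" by (simp add: z_def)
    also have "\<dots> = 1" using False by (simp add: cnj_mult_self power2_eq_square)
    finally show ?thesis .
  qed (simp add: z_def)
  have "0 \<le> t^2 * a - 2 * t * cmod c + b" for t :: real
  proof -
    define s where "s = of_real t * z"
    have "0 \<le> (\<Sum>k\<in>I. Re (cinner (s *s u k) (\<rho> *v (s *s u k))) + 2 * Re (cinner (s *s u k) (X *v v k))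
              + Re (cinner (v k) (\<sigma> *v v k)))"
      using bp unfolding blockpsd_def by (intro sum_nonneg) blast
    also have "\<dots> = (\<Sum>k\<in>I. t^2 * Re (cinner (u k) (\<rho> *v u k))) + 2 * Re (cnj s * c) + b"
    proof -
      have "cinner (s *s u k) (\<rho> *v (s *s u k)) = of_real (t^2) * cinner (u k) (\<rho> *v u k)" for k
      proof -
        have "cinner (s *s u k) (\<rho> *v (s *s u k)) = (cnj s * s) * cinner (u k) (\<rho> *v u k)"
          by (simp add: mv_scale cinner_scale_left cinner_scale_right mult_ac)
        also have "cnj s * s = of_real (t^2)"
          by (simp add: s_def power2_eq_square) (metis zz mult.assoc mult.commute mult.right_neutral)
        finally show ?thesis .
      qed
      moreover have "(\<Sum>k\<in>I. Re (cinner (s *s u k) (X *v v k))) = Re (cnj s * c)"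
        by (simp only: cinner_scale_left c_def sum_distrib_left Re_sum)
      ultimately show ?thesis
        unfolding sum.distrib b_def sum_distrib_left[symmetric] by (simp add: sum_distrib_left)
    qed
    also have "cnj s * c = - of_real (t * cmod c)"
      by (simp add: s_def mult.assoc zc)
    finally show ?thesis by (simp add: a_def sum_distrib_left)
  qed
  moreover have "a \<ge> 0" unfolding a_def using blockpsd_Q1[OF bp] by (simp add: sum_nonneg)
  ultimately have "cmod c ^ 2 \<le> a * b" using disc by simp
  then show ?thesis by (simp add: a_def b_def c_def)
qed

lemma CS1:
  assumes bp: "blockpsd \<rho> X \<sigma>"
  shows "cmod (cinner u (X *v v)) ^ 2 \<le> Re (cinner u (\<rho> *v u)) * Re (cinner v (\<sigma> *v v))"
  using CS_sum[OF bp, of "{()}" "\<lambda>_. u" "\<lambda>_. v"] by simp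

lemma cinner_diag_entry:
  "cinner (adj A *v axis k 1) (M *v (adj B *v axis k 1)) = (A ** M ** adj B) $ k $ k"
proof -
  have "cinner (adj A *v axis k 1) (M *v (adj B *v axis k 1)) = cinner (axis k 1) (A *v (M *v (adj B *v axis k 1)))"
    by (simp add: cinner_adj)
  also have "\<dots> = ((A ** M ** adj B) *v axis k 1) $ k"
    by (simp add: cinner_axis matrix_vector_mul_assoc matrix_mul_assoc)
  finally show ?thesis by (simp add: mat_mult_vec_axis)
qed

lemma CS2:
  assumes bp: "blockpsd \<rho> X \<sigma>"
  shows "cmod (trace (A ** X ** adj B)) ^ 2 \<le> Re (trace (A ** \<rho> ** adj A)) * Re (trace (B ** \<sigma> ** adj B))"
  using CS_sum[OF bp finite_class.finite_UNIV, of "\<lambda>k. adj A *v axis k 1" "\<lambda>k. adj B *v axis k 1"]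
  by (simp add: cinner_diag_entry trace_def Re_sum)

lemma fc_axis: assumes "unitary V" shows "fc V a *v (V *v axis k 1) = a k *s (V *v axis k 1)"
proof -
  have d: "diagm a *v axis k 1 = a k *s axis k 1"
    by (simp add: vec_eq_iff diagm_vec axis_def)
  have "fc V a *v (V *v axis k 1) = V *v (diagm a *v (adj V *v (V *v axis k 1)))"
    by (simp add: fc_def matrix_vector_mul_assoc matrix_mul_assoc)
  also have "\<dots> = V *v (a k *s axis k 1)" by (simp add: adj_V_col[OF assms] d)
  finally show ?thesis by (simp add: mv_scale)
qed

lemma cinner_unitary: assumes "unitary V" shows "cinner (V *v x) (V *v y) = cinner x y"
  using assms by (simp add: cinner_adj' matrix_vector_mul_assoc unitary_def)

lemma cinner_axis_axis: "cinner (axis k 1) (axis j 1) = (if k = j then 1 else 0)"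
proof -
  have eq: "(\<lambda>i. cnj (axis k 1 $ i) * axis j 1 $ i) = (\<lambda>i. if i = k then (if k = j then 1 else 0) else 0)"
    by (auto simp: axis_def)
  show ?thesis unfolding cinner_def eq by simp
qed

lemma norm_unitary_axis: assumes "unitary V" shows "norm (V *v axis k 1) = 1"
proof -
  have "cinner (V *v axis k 1) (V *v axis k 1) = 1"
    by (simp add: cinner_unitary[OF assms] cinner_axis_axis)
  then have "complex_of_real (norm (V *v axis k 1) ^ 2) = 1" by (simp only: cinner_self)
  then have "norm (V *v axis k 1) ^ 2 = 1" by (metis of_real_eq_1_iff)
  then show ?thesis by (smt (verit) norm_ge_zero power2_eq_1_iff)
qed

lemma unitary_mult: assumes "unitary A" "unitary B" shows "unitary (A ** B)"
proof -
  have "adj (A ** B) ** (A ** B) = adj B ** (adj A ** A) ** B" by (simp add: adj_mult matrix_mul_assoc)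
  moreover have "(A ** B) ** adj (A ** B) = A ** (B ** adj B) ** adj A" by (simp add: adj_mult matrix_mul_assoc)
  ultimately show ?thesis using assms by (simp add: unitary_def)
qed

lemma unitary_adj: assumes "unitary A" shows "unitary (adj A)"
  using assms by (simp add: unitary_def)

lemma psd_adjZZ: "psd (adj Z ** Z)"
proof (rule psdI)
  show "hermitian (adj Z ** Z)" by (simp add: hermitian_def adj_mult)
  fix v
  have "cinner v ((adj Z ** Z) *v v) = cinner (Z *v v) (Z *v v)"
    by (simp add: cinner_adj flip: matrix_vector_mul_assoc)
  then show "Re (cinner v ((adj Z ** Z) *v v)) \<ge> 0" by (simp add: cinner_self)
qed

lemma polar:
  fixes Z :: "complex^'n::finite^'n"
  shows "\<exists>W. unitary W \<and> Z = W ** msqrt (adj Z ** Z)"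
proof -
  define P where "P = adj Z ** Z"
  obtain V r where V: "unitary V" "\<forall>j. r j \<ge> 0" "P = fc V (\<lambda>j. of_real (r j))"
    using psd_spectral[OF psd_adjZZ[of Z]] unfolding P_def by blast
  have S: "msqrt P = fc V (\<lambda>j. of_real (sqrt (r j)))" by (simp add: V(3) msqrt_fc[OF V(1)] V(2))
  define e where "e k = V *v axis k 1" for k
  define zc where "zc k = Z *v e k" for k
  have zz: "cinner (zc j) (zc k) = of_real (r k) * (if j = k then 1 else 0)" for j k
  proof -
    have "cinner (zc j) (zc k) = cinner (e j) (P *v e k)"
      by (simp add: zc_def P_def cinner_adj flip: matrix_vector_mul_assoc)
    also have "\<dots> = of_real (r k) * cinner (e j) (e k)"
      by (simp add: V(3) e_def fc_axis[OF V(1)] cinner_scale_right)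
    finally show ?thesis by (simp add: e_def cinner_unitary[OF V(1)] cinner_axis_axis)
  qed
  define J where "J = {j. r j > 0}"
  define g where "g j = (1 / sqrt (r j)) *\<^sub>R zc j" for j
  have "orthon J g"
    unfolding orthon_def
  proof (intro ballI)
    fix j k assume "j \<in> J" "k \<in> J"
    then have "r j > 0" by (simp add: J_def)
    show "cinner (g j) (g k) = (if j = k then 1 else 0)"
    proof (cases "j = k")
      case True
      then show ?thesis using \<open>r j > 0\<close> by (simp add: g_def cinner_scaleR_left cinner_scaleR_right zz
            flip: of_real_mult)
    qed (simp add: g_def cinner_scaleR_left cinner_scaleR_right zz)
  qed
  then obtain g' where g': "\<forall>j\<in>J. g' j = g j" "orthon UNIV g'" using ortho_extend by blast
  define W' where "W' = colmat g'"
  have UW': "unitary W'" unfolding W'_def by (rule colmat_unitary[OF g'(2)])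
  have zcg: "zc k = of_real (sqrt (r k)) *s g' k" for k
  proof (cases "r k > 0")
    case True
    then have "g' k = (1 / sqrt (r k)) *\<^sub>R zc k" using g'(1) by (simp add: J_def g_def)
    show ?thesis
      unfolding vec_eq_iff
    proof (intro allI)
      fix i
      have "(of_real (sqrt (r k)) *s g' k) $ i = of_real (sqrt (r k)) * ((1 / sqrt (r k)) *\<^sub>R zc k $ i)"
        by (simp add: \<open>g' k = _\<close> vector_scaleR_component)
      also have "\<dots> = of_real (sqrt (r k) * (1 / sqrt (r k))) * zc k $ i"
        by (simp only: scaleR_conv_of_real of_real_mult mult.assoc)
      also have "\<dots> = zc k $ i" using True by simp
      finally show "zc k $ i = (of_real (sqrt (r k)) *s g' k) $ i" by simp
    qed
  next
    case False
    then have "r k = 0" using V(2) by (meson linorder_not_le order_antisym)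
    then have "cinner (zc k) (zc k) = 0" by (simp add: zz)
    then have "zc k = 0" by (simp add: cinner_self)
    then show ?thesis using \<open>r k = 0\<close> by simp
  qed
  have ZV: "Z ** V = W' ** diagm (\<lambda>j. of_real (sqrt (r j)))"
  proof -
    have "(Z ** V) $ i $ k = (W' ** diagm (\<lambda>j. of_real (sqrt (r j)))) $ i $ k" for i k
    proof -
      have "(Z ** V) $ i $ k = zc k $ i"
        by (simp add: zc_def e_def matrix_vector_mul_assoc mat_mult_vec_axis)
      also have "\<dots> = g' k $ i * of_real (sqrt (r k))" by (simp add: zcg mult.commute)
      finally show ?thesis by (simp add: mult_diagm_right W'_def colmat_def)
    qed
    then show ?thesis by (simp add: vec_eq_iff)
  qed
  define W where "W = W' ** adj V"
  have UW: "unitary W" unfolding W_def by (intro unitary_mult UW' unitary_adj V(1))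
  have "Z = Z ** (V ** adj V)" using V(1) by (simp add: unitary_def)
  also have "\<dots> = W' ** diagm (\<lambda>j. of_real (sqrt (r j))) ** adj V" by (simp add: matrix_mul_assoc ZV)
  also have "\<dots> = W ** msqrt P"
    using V(1) by (simp add: S W_def fc_def matrix_mul_assoc unitary_def)
      (simp add: unitary_def flip: matrix_mul_assoc)
  finally have "Z = W ** msqrt (adj Z ** Z)" by (simp add: P_def)
  then show ?thesis using UW by blast
qed

lemma fc_mult_real: assumes "unitary V"
  shows "fc V (\<lambda>j. of_real (a j)) ** fc V (\<lambda>j. of_real (b j)) = fc V (\<lambda>j. of_real (a j * b j))"
  by (simp add: fc_mult[OF assms])

lemma fc_zero: "fc V (\<lambda>_. 0) = 0"
proof -
  have "diagm (\<lambda>_. 0) = (0 :: complex^'a^'a)" by (simp add: diagm_def vec_eq_iff)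
  then show ?thesis by (simp add: fc_def)
qed

lemma fc_cong: "(\<And>j. a j = b j) \<Longrightarrow> fc V a = fc V b"
  by (metis ext)

lemma pinv:
  fixes \<rho> :: "complex^'n::finite^'n"
  assumes "psd \<rho>"
  shows "\<exists>R P N. msqrt \<rho> ** R = P \<and> R ** msqrt \<rho> = P \<and> R ** \<rho> ** R = P \<and> adj R = R \<and>
     P = mat 1 - N \<and> \<rho> ** N = 0 \<and> adj N = N \<and> (\<forall>x. Re (cinner x (P *v x)) \<le> norm x ^ 2)"
proof -
  obtain V r where V: "unitary V" "\<forall>j. r j \<ge> 0" "\<rho> = fc V (\<lambda>j. of_real (r j))"
    using psd_spectral[OF assms] by blast
  have a: "msqrt \<rho> = fc V (\<lambda>j. of_real (sqrt (r j)))" by (simp add: V(3) msqrt_fc[OF V(1)] V(2))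
  define ri where "ri j = (if r j > 0 then 1 / sqrt (r j) else 0)" for j
  define pi where "pi j = (if r j > 0 then 1 else 0 :: real)" for j
  define ni where "ni j = (if r j > 0 then 0 else 1 :: real)" for j
  define R where "R = fc V (\<lambda>j. of_real (ri j))"
  define P where "P = fc V (\<lambda>j. of_real (pi j))"
  define N where "N = fc V (\<lambda>j. of_real (ni j))"
  have "msqrt \<rho> ** R = P" unfolding a R_def P_def fc_mult_real[OF V(1)]
    by (rule fc_cong) (simp add: ri_def pi_def)
  moreover have "R ** msqrt \<rho> = P" unfolding a R_def P_def fc_mult_real[OF V(1)]
    by (rule fc_cong) (simp add: ri_def pi_def)
  moreover have "R ** \<rho> ** R = P" unfolding V(3) R_def P_def fc_mult_real[OF V(1)]
  proof (rule fc_cong)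
    fix j
    show "complex_of_real (ri j * r j * ri j) = complex_of_real (pi j)"
    proof (cases "r j > 0")
      case True
      then have "ri j * r j * ri j = 1" by (simp add: ri_def field_simps)
      then show ?thesis using True by (simp add: pi_def)
    qed (simp add: ri_def pi_def)
  qed
  moreover have "adj R = R" by (simp add: R_def adj_fc)
  moreover have "P = mat 1 - N" unfolding P_def N_def fc_one[OF V(1), symmetric] fc_diff
    by (rule fc_cong) (simp add: pi_def ni_def)
  moreover have "\<rho> ** N = 0" unfolding V(3) N_def fc_mult_real[OF V(1)]
  proof (subst fc_zero[symmetric], rule fc_cong)
    fix j
    have "\<not> r j > 0 \<Longrightarrow> r j = 0" using V(2) by (meson linorder_not_le order_antisym)
    then show "complex_of_real (r j * ni j) = 0" by (auto simp: ni_def)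
  qed
  moreover have "adj N = N" by (simp add: N_def adj_fc)
  moreover have "Re (cinner x (P *v x)) \<le> norm x ^ 2" for x
  proof -
    have "Re (cinner x (P *v x)) = (\<Sum>j\<in>UNIV. pi j * cmod ((adj V *v x) $ j) ^ 2)"
      by (simp add: P_def fc_form_real)
    also have "\<dots> \<le> (\<Sum>j\<in>UNIV. cmod ((adj V *v x) $ j) ^ 2)"
      by (intro sum_mono) (simp add: pi_def)
    also have "\<dots> = norm x ^ 2" by (rule sum_cmod_unitary[OF V(1)])
    finally show ?thesis .
  qed
  ultimately show ?thesis by blast
qed

lemma msqrt_herm: "psd \<rho> \<Longrightarrow> adj (msqrt \<rho>) = msqrt \<rho>"
  using msqrt_psd(1) psd_hermitian hermitian_def by blast

lemma adjZZ_eq: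
  assumes "psd \<rho>" "psd \<sigma>"
  shows "adj (msqrt \<sigma> ** msqrt \<rho>) ** (msqrt \<sigma> ** msqrt \<rho>) = msqrt \<rho> ** \<sigma> ** msqrt \<rho>"
proof -
  have "adj (msqrt \<sigma> ** msqrt \<rho>) ** (msqrt \<sigma> ** msqrt \<rho>) = msqrt \<rho> ** (msqrt \<sigma> ** msqrt \<sigma>) ** msqrt \<rho>"
    by (simp add: adj_mult msqrt_herm assms matrix_mul_assoc)
  then show ?thesis by (simp add: msqrt_psd(2)[OF assms(2)])
qed

lemma fid_attain:
  fixes \<rho> \<sigma> :: "complex^'n::finite^'n"
  assumes r: "psd \<rho>" and s: "psd \<sigma>"
  shows "\<exists>X. blockpsd \<rho> X \<sigma> \<and> trace X = trace (msqrt (msqrt \<rho> ** \<sigma> ** msqrt \<rho>))"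
proof -
  define a where "a = msqrt \<rho>"
  define b where "b = msqrt \<sigma>"
  have ha: "adj a = a" and hb: "adj b = b" using msqrt_herm r s by (auto simp: a_def b_def)
  have aa: "a ** a = \<rho>" and bb: "b ** b = \<sigma>" using msqrt_psd(2) r s by (auto simp: a_def b_def)
  define Z where "Z = b ** a"
  obtain W where W: "unitary W" "Z = W ** msqrt (adj Z ** Z)" using polar by blast
  define S where "S = msqrt (a ** \<sigma> ** a)"
  have ZS: "Z = W ** S" using W(2) adjZZ_eq[OF r s] by (simp add: Z_def S_def a_def b_def)
  define X where "X = a ** adj W ** b"
  have "trace X = trace ((adj W ** b) ** a)" unfolding X_def
    by (metis matrix_mul_assoc trace_mul_sym)
  also have "\<dots> = trace (adj W ** Z)" by (simp add: Z_def matrix_mul_assoc)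
  also have "\<dots> = trace S" using W(1) by (simp add: ZS matrix_mul_assoc unitary_def)
  finally have tr: "trace X = trace S" .
  have "blockpsd \<rho> X \<sigma>" unfolding blockpsd_def
  proof (intro allI)
    fix u v
    define \<alpha> where "\<alpha> = W *v (a *v u)"
    define \<beta> where "\<beta> = b *v v"
    have 1: "cinner u (\<rho> *v u) = cinner \<alpha> \<alpha>"
    proof -
      have "cinner u (\<rho> *v u) = cinner (a *v u) (a *v u)"
        by (simp add: cinner_adj ha flip: aa matrix_vector_mul_assoc)
      then show ?thesis by (simp add: \<alpha>_def cinner_unitary[OF W(1)])
    qed
    have 2: "cinner u (X *v v) = cinner \<alpha> \<beta>"
      by (simp add: X_def \<alpha>_def \<beta>_def cinner_adj ha flip: matrix_vector_mul_assoc)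
    have 3: "cinner v (\<sigma> *v v) = cinner \<beta> \<beta>"
      by (simp add: \<beta>_def cinner_adj hb flip: bb matrix_vector_mul_assoc)
    have "Re (cinner (\<alpha> + \<beta>) (\<alpha> + \<beta>)) = Re (cinner \<alpha> \<alpha>) + 2 * Re (cinner \<alpha> \<beta>) + Re (cinner \<beta> \<beta>)"
      by (simp add: cinner_add_left cinner_add_right cinner_commute[of \<beta> \<alpha>])
    moreover have "Re (cinner (\<alpha> + \<beta>) (\<alpha> + \<beta>)) \<ge> 0" by (simp add: cinner_self)
    ultimately show "0 \<le> Re (cinner u (\<rho> *v u)) + 2 * Re (cinner u (X *v v)) + Re (cinner v (\<sigma> *v v))"
      unfolding 1 2 3 by linarith
  qed
  then show ?thesis using tr by (auto simp: S_def a_def)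
qed

lemma trace_diag_right: "trace (G ** diagm a) = (\<Sum>j\<in>UNIV. G $ j $ j * a j)"
  by (simp add: trace_def mult_diagm_right)

lemma fid_upper:
  fixes \<rho> \<sigma> X :: "complex^'n::finite^'n"
  assumes r: "psd \<rho>" and s: "psd \<sigma>" and bp: "blockpsd \<rho> X \<sigma>"
  shows "Re (trace X) \<le> Re (trace (msqrt (msqrt \<rho> ** \<sigma> ** msqrt \<rho>)))"
proof -
  define a where "a = msqrt \<rho>"
  define b where "b = msqrt \<sigma>"
  obtain Ra Pa Na where A: "a ** Ra = Pa" "Ra ** a = Pa" "Ra ** \<rho> ** Ra = Pa" "adj Ra = Ra"
     "Pa = mat 1 - Na" "\<rho> ** Na = 0" "adj Na = Na" "\<forall>x. Re (cinner x (Pa *v x)) \<le> norm x ^ 2"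
    using pinv[OF r] unfolding a_def by blast
  obtain Rb Pb Nb where B: "b ** Rb = Pb" "Rb ** b = Pb" "Rb ** \<sigma> ** Rb = Pb" "adj Rb = Rb"
     "Pb = mat 1 - Nb" "\<sigma> ** Nb = 0" "adj Nb = Nb" "\<forall>x. Re (cinner x (Pb *v x)) \<le> norm x ^ 2"
    using pinv[OF s] unfolding b_def by blast
  have NX: "Na ** X = 0"
  proof (rule matrix_eq_cinner)
    fix e v
    have "cinner e ((Na ** X) *v v) = cinner (Na *v e) (X *v v)"
      by (simp add: cinner_adj A(7) flip: matrix_vector_mul_assoc)
    moreover have "cmod (cinner (Na *v e) (X *v v)) ^ 2 \<le> 0"
    proof -
      have "\<rho> *v (Na *v e) = 0" by (simp add: matrix_vector_mul_assoc A(6))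
      then show ?thesis using CS1[OF bp, of "Na *v e" v] by simp
    qed
    ultimately show "cinner e ((Na ** X) *v v) = cinner e (0 *v v)" by simp
  qed
  have XN: "X ** Nb = 0"
  proof (rule matrix_eq_cinner)
    fix u v
    have "cinner u ((X ** Nb) *v v) = cinner u (X *v (Nb *v v))"
      by (simp flip: matrix_vector_mul_assoc)
    moreover have "cmod (cinner u (X *v (Nb *v v))) ^ 2 \<le> 0"
    proof -
      have "\<sigma> *v (Nb *v v) = 0" by (simp add: matrix_vector_mul_assoc B(6))
      then show ?thesis using CS1[OF bp, of u "Nb *v v"] by simp
    qed
    ultimately show "cinner u ((X ** Nb) *v v) = cinner u (0 *v v)" by simp
  qed
  have PX: "Pa ** X = X" by (simp add: A(5) matrix_diff_rdistrib' NX)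
  have XP: "X ** Pb = X" by (simp add: B(5) matrix_diff_ldistrib' XN)
  define K where "K = Ra ** X ** Rb"
  define Z where "Z = b ** a"
  have "X = Pa ** X ** Pb" by (simp add: PX XP)
  also have "\<dots> = a ** (K ** b)" by (simp add: K_def flip: A(1) B(2)) (simp add: matrix_mul_assoc)
  finally have "trace X = trace ((K ** b) ** a)" by (simp add: trace_mul_sym[of a])
  then have trX: "trace X = trace (K ** Z)" by (simp add: Z_def matrix_mul_assoc)
  obtain W where W: "unitary W" "Z = W ** msqrt (adj Z ** Z)" using polar by blast
  define S where "S = msqrt (a ** \<sigma> ** a)"
  have ZS: "Z = W ** S" using W(2) adjZZ_eq[OF r s] by (simp add: Z_def S_def a_def b_def)
  have psdS: "psd S" unfolding S_def using adjZZ_eq[OF r s] psd_adjZZ msqrt_psd(1)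
    by (metis a_def b_def)
  obtain V c where V: "unitary V" "\<forall>j. c j \<ge> 0" "S = fc V (\<lambda>j. of_real (c j))"
    using psd_spectral[OF psdS] by blast
  define G where "G = adj V ** (K ** W) ** V"
  have "trace X = trace (K ** W ** V ** diagm (\<lambda>j. of_real (c j)) ** adj V)"
    by (simp add: trX ZS V(3) fc_def matrix_mul_assoc)
  also have "\<dots> = trace (adj V ** (K ** W ** V ** diagm (\<lambda>j. of_real (c j))))"
    by (rule trace_mul_sym)
  also have "\<dots> = trace (G ** diagm (\<lambda>j. of_real (c j)))"
    unfolding G_def by (simp add: matrix_mul_assoc)
  finally have trX2: "trace X = (\<Sum>j\<in>UNIV. G $ j $ j * of_real (c j))" by (simp add: trace_diag_right)
  have Kb: "cmod (cinner x (K *v y)) \<le> norm x * norm y" for x y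
  proof -
    have "cinner x (K *v y) = cinner (Ra *v x) (X *v (Rb *v y))"
      by (simp add: K_def cinner_adj A(4) flip: matrix_vector_mul_assoc)
    moreover have "Re (cinner (Ra *v x) (\<rho> *v (Ra *v x))) = Re (cinner x (Pa *v x))"
      by ((simp add: cinner_adj A(4) flip: A(3) matrix_vector_mul_assoc), (simp add: matrix_vector_mul_assoc)?)
    moreover have "Re (cinner (Rb *v y) (\<sigma> *v (Rb *v y))) = Re (cinner y (Pb *v y))"
      by ((simp add: cinner_adj B(4) flip: B(3) matrix_vector_mul_assoc), (simp add: matrix_vector_mul_assoc)?)
    ultimately have "cmod (cinner x (K *v y)) ^ 2 \<le> Re (cinner x (Pa *v x)) * Re (cinner y (Pb *v y))"
      using CS1[OF bp, of "Ra *v x" "Rb *v y"] by simp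
    also have "\<dots> \<le> norm x ^ 2 * norm y ^ 2"
    proof (rule mult_mono)
      show "Re (cinner x (Pa *v x)) \<le> norm x ^ 2" "Re (cinner y (Pb *v y)) \<le> norm y ^ 2" using A(8) B(8) by auto
      show "0 \<le> norm x ^ 2" by simp
      have "Re (cinner (Rb *v y) (\<sigma> *v (Rb *v y))) \<ge> 0" using psd_form[OF s] .
      then show "0 \<le> Re (cinner y (Pb *v y))"
        by ((simp add: cinner_adj B(4) flip: B(3) matrix_vector_mul_assoc), (simp add: matrix_vector_mul_assoc)?)
    qed
    also have "\<dots> = (norm x * norm y) ^ 2" by (simp add: power_mult_distrib)
    finally have "cmod (cinner x (K *v y)) ^ 2 \<le> (norm x * norm y) ^ 2" .
    then show ?thesis by (rule power2_le_imp_le) simp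
  qed
  have Gb: "Re (G $ j $ j) \<le> 1" for j
  proof -
    have "G $ j $ j = cinner (V *v axis j 1) (K *v (W *v (V *v axis j 1)))"
      using cinner_diag_entry[where A="adj V" and M="K ** W" and B="adj V" and k=j] by (simp add: G_def matrix_vector_mul_assoc matrix_mul_assoc)
    then have "cmod (G $ j $ j) \<le> norm (V *v axis j 1) * norm (W *v (V *v axis j 1))" using Kb by simp
    also have "\<dots> = 1" using norm_unitary_axis[OF V(1)] norm_unitary_axis[OF unitary_mult[OF W(1) V(1)]]
      by (simp add: matrix_vector_mul_assoc)
    finally show ?thesis using complex_Re_le_cmod order_trans by blast
  qed
  have "Re (trace X) = (\<Sum>j\<in>UNIV. Re (G $ j $ j) * c j)" by (simp add: trX2 Re_sum)
  also have "\<dots> \<le> (\<Sum>j\<in>UNIV. c j)"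
  proof (rule sum_mono)
    fix j
    have "Re (G $ j $ j) * c j \<le> 1 * c j" by (rule mult_right_mono[OF Gb V(2)[rule_format]])
    then show "Re (G $ j $ j) * c j \<le> c j" by simp
  qed
  also have "\<dots> = Re (trace S)" by (simp add: V(3) trace_fc[OF V(1)] Re_sum)
  finally show ?thesis by (simp add: S_def a_def)
qed

definition bd :: "('a::finite \<Rightarrow> complex^'r::finite^'r) \<Rightarrow> complex^('a \<times> 'r)^('a \<times> 'r)" where
  "bd M = (\<chi> a b. if fst a = fst b then M (fst a) $ snd a $ snd b else 0)"

lemma sum_pair_UNIV: "(\<Sum>c\<in>(UNIV::('a::finite \<times> 'b::finite) set). f c) = (\<Sum>c1\<in>UNIV. \<Sum>c2\<in>UNIV. f (c1, c2))"
  by (simp add: sum.cartesian_product)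

lemma bd_mult: "bd M ** bd N = bd (\<lambda>j. M j ** N j)"
proof -
  have "(\<Sum>c\<in>UNIV. (if fst a = fst c then M (fst a) $ snd a $ snd c else 0) *
          (if fst c = fst b then N (fst c) $ snd c $ snd b else 0)) =
        (if fst a = fst b then (M (fst a) ** N (fst a)) $ snd a $ snd b else 0)" for a b :: "'a \<times> 'b"
  proof -
    have eq: "(\<lambda>c1. \<Sum>c2\<in>UNIV. (if fst a = c1 then M (fst a) $ snd a $ c2 else 0) *
          (if c1 = fst b then N c1 $ c2 $ snd b else 0)) =
        (\<lambda>c1. if c1 = fst a then (if fst a = fst b then (M (fst a) ** N (fst a)) $ snd a $ snd b else 0) else 0)"
      by (rule ext) (auto simp: matrix_matrix_mult_def)
    show ?thesis unfolding sum_pair_UNIV fst_conv snd_conv eq by simp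
  qed
  then show ?thesis by (simp add: bd_def matrix_matrix_mult_def vec_eq_iff)
qed

lemma adj_bd: "adj (bd M) = bd (\<lambda>j. adj (M j))"
  by (auto simp: bd_def vec_eq_iff)

lemma bd_diff: "bd M - bd N = bd (\<lambda>j. M j - N j)"
  by (auto simp: bd_def vec_eq_iff)

lemma bd_one: "bd (\<lambda>_. mat 1) = mat 1"
  by (auto simp: bd_def vec_eq_iff mat_def prod_eq_iff)

lemma ctrl_bd: "ctrl_op i U = bd (\<lambda>j. if j = i then U else mat 1)"
  by (auto simp: bd_def ctrl_op_def vec_eq_iff mat_def)

lemma proj_bd: "proj_i i = (bd (\<lambda>j. if j = i then mat 1 else 0) :: complex^('a::finite \<times> 'r::finite)^('a \<times> 'r))"
  by (auto simp: bd_def proj_i_def vec_eq_iff mat_def)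


lemma cinner_sandwich: "cinner u ((A ** M ** adj B) *v v) = cinner (adj A *v u) (M *v (adj B *v v))"
  by (simp add: cinner_adj flip: matrix_vector_mul_assoc)

lemma kraus2:
  assumes bp: "blockpsd \<rho> X \<sigma>"
  shows "blockpsd (A1 ** \<rho> ** adj A1 + A2 ** \<rho> ** adj A2) (A1 ** X ** adj B1 + A2 ** X ** adj B2)
           (B1 ** \<sigma> ** adj B1 + B2 ** \<sigma> ** adj B2)"
  unfolding blockpsd_def
proof (intro allI)
  fix u v
  have h1: "0 \<le> Re (cinner (adj A1 *v u) (\<rho> *v (adj A1 *v u))) + 2 * Re (cinner (adj A1 *v u) (X *v (adj B1 *v v)))
     + Re (cinner (adj B1 *v v) (\<sigma> *v (adj B1 *v v)))" using bp unfolding blockpsd_def by blast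
  have h2: "0 \<le> Re (cinner (adj A2 *v u) (\<rho> *v (adj A2 *v u))) + 2 * Re (cinner (adj A2 *v u) (X *v (adj B2 *v v)))
     + Re (cinner (adj B2 *v v) (\<sigma> *v (adj B2 *v v)))" using bp unfolding blockpsd_def by blast
  show "0 \<le> Re (cinner u ((A1 ** \<rho> ** adj A1 + A2 ** \<rho> ** adj A2) *v u)) +
         2 * Re (cinner u ((A1 ** X ** adj B1 + A2 ** X ** adj B2) *v v)) +
         Re (cinner v ((B1 ** \<sigma> ** adj B1 + B2 ** \<sigma> ** adj B2) *v v))"
    using h1 h2 by (simp add: matrix_vector_mult_add_rdistrib cinner_add_right cinner_sandwich)
qed

context
  fixes i :: "'a::finite" and U :: "complex^'r::finite^'r"
  assumes UU: "unitary U" and herm: "hermitian (ctrl_op i U)"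
begin

lemma O_adj: "adj (ctrl_op i U) = ctrl_op i U"
  using herm by (simp add: hermitian_def)

lemma O_sq: "ctrl_op i U ** ctrl_op i U = mat 1"
proof -
  have "ctrl_op i U ** adj (ctrl_op i U) = mat 1"
    unfolding ctrl_bd adj_bd bd_mult
    using UU by (simp add: unitary_def bd_one[symmetric] if_distrib cong: if_cong)
  then show ?thesis by (simp add: O_adj)
qed

lemma P_sq: "proj_i i ** proj_i i = (proj_i i :: complex^('a \<times> 'r)^('a \<times> 'r))"
  unfolding proj_bd bd_mult by (rule arg_cong[where f=bd]) auto

lemma adj_zero: "adj 0 = 0" by (simp add: vec_eq_iff)

lemma P_adj: "adj (proj_i i) = (proj_i i :: complex^('a \<times> 'r)^('a \<times> 'r))"
  unfolding proj_bd adj_bd by (rule arg_cong[where f=bd]) (auto simp: adj_zero)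

lemma PO: "proj_i i ** ctrl_op i U = ctrl_op i U ** proj_i i"
  unfolding proj_bd ctrl_bd bd_mult by (rule arg_cong[where f=bd]) auto

lemma P1O: "proj_i i ** (mat 1 - ctrl_op i U) = mat 1 - ctrl_op i U"
  unfolding proj_bd ctrl_bd bd_one[symmetric] bd_diff bd_mult
  by (rule arg_cong[where f=bd]) (auto simp: matrix_diff_ldistrib')

end

lemma trace_scaleR: "trace (c *\<^sub>R (A::complex^'n^'n)) = of_real c * trace A"
  unfolding trace_def vector_scaleR_component by (simp add: scaleR_conv_of_real sum_distrib_left)

lemma psd_kraus2:
  assumes "psd \<rho>"
  shows "psd (A1 ** \<rho> ** adj A1 + A2 ** \<rho> ** adj A2)"
proof (rule psdI)
  have h: "adj \<rho> = \<rho>" using assms by (simp add: psd_def hermitian_def)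
  show "hermitian (A1 ** \<rho> ** adj A1 + A2 ** \<rho> ** adj A2)"
    by (simp add: hermitian_def adj_add adj_mult h matrix_mul_assoc)
  fix v
  have "Re (cinner v ((A1 ** \<rho> ** adj A1 + A2 ** \<rho> ** adj A2) *v v)) =
        Re (cinner (adj A1 *v v) (\<rho> *v (adj A1 *v v))) + Re (cinner (adj A2 *v v) (\<rho> *v (adj A2 *v v)))"
    by (simp add: matrix_vector_mult_add_rdistrib cinner_add_right cinner_sandwich)
  also have "\<dots> \<ge> 0" using psd_form[OF assms] by (simp add: add_nonneg_nonneg)
  finally show "Re (cinner v ((A1 ** \<rho> ** adj A1 + A2 ** \<rho> ** adj A2) *v v)) \<ge> 0" .
qed

lemma sandwich_lin:
  fixes S Q :: "complex^'n^'n"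
  shows "(x *\<^sub>R mat 1 + y *\<^sub>R Q) ** S ** (x *\<^sub>R mat 1 + y *\<^sub>R Q) =
    (x * x) *\<^sub>R S + (x * y) *\<^sub>R (S ** Q) + (x * y) *\<^sub>R (Q ** S) + (y * y) *\<^sub>R (Q ** S ** Q)"
  by (simp add: matrix_add_ldistrib matrix_add_rdistrib' matrix_scaleR_left matrix_scaleR_right
      scaleR_add_right algebra_simps)


lemma real_ineq_eta:
  fixes \<eta> p q :: real
  assumes "\<eta> \<le> p" "p \<le> 1 - \<eta>" "\<eta> \<le> q" "q \<le> 1 - \<eta>"
  shows "2 * \<eta> * (1 - \<eta>) \<le> p * (1 - q) + (1 - p) * q"
proof -
  have "0 \<le> (p - \<eta>) * (1 - \<eta> - q) + (q - \<eta>) * (1 - \<eta> - p)"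
    using assms by (intro add_nonneg_nonneg mult_nonneg_nonneg) auto
  then show ?thesis by (simp add: algebra_simps)
qed

theorem lemma1:
  fixes i :: "'a::finite"
    and U :: "complex^'r::finite^'r"
    and \<eta> p q :: real
    and \<rho> \<sigma> :: "complex^('a \<times> 'r)^('a \<times> 'r)"
  assumes "unitary U"
    and "hermitian (ctrl_op i U)"
    and "0 < \<eta>" and "\<eta> < 1"
    and "density \<rho>" and "density \<sigma>"
    and "\<eta> \<le> p" and "p \<le> 1 - \<eta>"
    and "\<eta> \<le> q" and "q \<le> 1 - \<eta>"
  shows "sqrt_fidelity (chan i U p \<rho>) (chan i U q \<sigma>)
           \<ge> sqrt_fidelity \<rho> \<sigma>
              - (p - q)^2 / (\<eta> * (1 - \<eta>))
                * sqrt (Re (trace (proj_i i ** \<rho>)) * Re (trace (proj_i i ** \<sigma>)))"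
proof -
  define Q where "Q = ctrl_op i U"
  define P where "P = (proj_i i :: complex^('a \<times> 'r)^('a \<times> 'r))"
  have Qa: "adj Q = Q" unfolding Q_def by (rule O_adj[OF assms(1,2)])
  have QQ: "Q ** Q = mat 1" unfolding Q_def by (rule O_sq[OF assms(1,2)])
  have PP: "P ** P = P" unfolding P_def by (rule P_sq[OF assms(1,2)])
  have Pa: "adj P = P" unfolding P_def by (rule P_adj[OF assms(1,2)])
  have PQ: "P ** Q = Q ** P" unfolding P_def Q_def by (rule PO[OF assms(1,2)])
  have P1Q: "P ** (mat 1 - Q) = mat 1 - Q" unfolding P_def Q_def by (rule P1O[OF assms(1,2)])
  have r: "psd \<rho>" and s: "psd \<sigma>" using assms(5,6) by (auto simp: density_def)
  have p01: "0 \<le> p" "p \<le> 1" and q01: "0 \<le> q" "q \<le> 1" using assms(3,4,7-10) by auto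
  define \<alpha> where "\<alpha> = sqrt (1 - p)"
  define \<beta> where "\<beta> = sqrt p"
  define \<gamma> where "\<gamma> = sqrt (1 - q)"
  define \<delta> where "\<delta> = sqrt q"
  have \<alpha>2: "\<alpha> * \<alpha> = 1 - p" and \<beta>2: "\<beta> * \<beta> = p" and \<gamma>2: "\<gamma> * \<gamma> = 1 - q" and \<delta>2: "\<delta> * \<delta> = q"
    using p01 q01 by (auto simp: \<alpha>_def \<beta>_def \<gamma>_def \<delta>_def)
  define C where "C = \<alpha> * \<gamma> + \<beta> * \<delta>"
  define Sn where "Sn = \<beta> * \<gamma> - \<alpha> * \<delta>"
  have CS1: "C * C + Sn * Sn = 1"
  proof -
    have "C * C + Sn * Sn = (\<alpha> * \<alpha> + \<beta> * \<beta>) * (\<gamma> * \<gamma> + \<delta> * \<delta>)"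
      by (simp add: C_def Sn_def algebra_simps)
    then show ?thesis by (simp add: \<alpha>2 \<beta>2 \<gamma>2 \<delta>2)
  qed
  define x1 where "x1 = \<gamma> * C"
  define x2 where "x2 = \<gamma> * Sn"
  define y1 where "y1 = - \<delta> * Sn"
  define y2 where "y2 = \<delta> * C"
  have xx: "x1 * x1 + x2 * x2 = 1 - q"
  proof -
    have "x1 * x1 + x2 * x2 = (\<gamma> * \<gamma>) * (C * C + Sn * Sn)" by (simp add: x1_def x2_def algebra_simps)
    then show ?thesis by (simp add: CS1 \<gamma>2)
  qed
  have yy: "y1 * y1 + y2 * y2 = q"
  proof -
    have "y1 * y1 + y2 * y2 = (\<delta> * \<delta>) * (C * C + Sn * Sn)" by (simp add: y1_def y2_def algebra_simps)
    then show ?thesis by (simp add: CS1 \<delta>2)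
  qed
  have xy: "x1 * y1 + x2 * y2 = 0" by (simp add: x1_def x2_def y1_def y2_def algebra_simps)
  define A1 where "A1 = \<alpha> *\<^sub>R (mat 1 :: complex^('a \<times> 'r)^('a \<times> 'r))"
  define A2 where "A2 = \<beta> *\<^sub>R Q"
  define B1 where "B1 = x1 *\<^sub>R mat 1 + y1 *\<^sub>R Q"
  define B2 where "B2 = x2 *\<^sub>R mat 1 + y2 *\<^sub>R Q"
  have aA1: "adj A1 = A1" by (simp add: A1_def adj_scaleR)
  have aA2: "adj A2 = A2" by (simp add: A2_def adj_scaleR Qa)
  have aB1: "adj B1 = B1" by (simp add: B1_def adj_scaleR adj_add Qa)
  have aB2: "adj B2 = B2" by (simp add: B2_def adj_scaleR adj_add Qa)
  have rho_eq: "chan i U p \<rho> = A1 ** \<rho> ** adj A1 + A2 ** \<rho> ** adj A2"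
  proof -
    have "A1 ** \<rho> ** adj A1 = (\<alpha> * \<alpha>) *\<^sub>R \<rho>"
      unfolding aA1 by (simp add: A1_def matrix_scaleR_left matrix_scaleR_right)
    moreover have "A2 ** \<rho> ** adj A2 = (\<beta> * \<beta>) *\<^sub>R (Q ** \<rho> ** adj Q)"
      unfolding aA2 by (simp add: Qa A2_def matrix_scaleR_left matrix_scaleR_right)
    ultimately show ?thesis by (simp add: chan_def \<alpha>2 \<beta>2 Q_def)
  qed
  have sig_eq: "chan i U q \<sigma> = B1 ** \<sigma> ** adj B1 + B2 ** \<sigma> ** adj B2"
  proof -
    have "B1 ** \<sigma> ** adj B1 + B2 ** \<sigma> ** adj B2 =
       (x1 * x1 + x2 * x2) *\<^sub>R \<sigma> + (x1 * y1 + x2 * y2) *\<^sub>R (\<sigma> ** Q)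
       + (x1 * y1 + x2 * y2) *\<^sub>R (Q ** \<sigma>) + (y1 * y1 + y2 * y2) *\<^sub>R (Q ** \<sigma> ** Q)"
      unfolding aB1 aB2 unfolding B1_def B2_def sandwich_lin by (simp add: scaleR_add_left)
    then show ?thesis by (simp add: xx yy xy chan_def Q_def[symmetric] Qa)
  qed
  obtain X where bpX: "blockpsd \<rho> X \<sigma>" and trX: "trace X = trace (msqrt (msqrt \<rho> ** \<sigma> ** msqrt \<rho>))"
    using fid_attain[OF r s] by blast
  define X' where "X' = A1 ** X ** adj B1 + A2 ** X ** adj B2"
  have bp': "blockpsd (chan i U p \<rho>) X' (chan i U q \<sigma>)"
    unfolding rho_eq sig_eq X'_def by (rule kraus2[OF bpX])
  have psd1: "psd (chan i U p \<rho>)" unfolding rho_eq by (rule psd_kraus2[OF r])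
  have psd2: "psd (chan i U q \<sigma>)" unfolding sig_eq by (rule psd_kraus2[OF s])
  have up: "Re (trace X') \<le> sqrt_fidelity (chan i U p \<rho>) (chan i U q \<sigma>)"
    unfolding sqrt_fidelity_def by (rule fid_upper[OF psd1 psd2 bp'])
  define t where "t = trace X"
  define sx where "sx = trace (Q ** X)"
  have trXQ: "trace (X ** Q) = sx" unfolding sx_def by (rule trace_mul_sym)
  have trQXQ: "trace (Q ** X ** Q) = t"
  proof -
    have "trace ((Q ** X) ** Q) = trace (Q ** (Q ** X))" by (rule trace_mul_sym)
    then show ?thesis by (simp add: matrix_mul_assoc QQ t_def)
  qed
  have trX': "trace X' = of_real (\<alpha> * x1 + \<beta> * y2) * t + of_real (\<alpha> * y1 + \<beta> * x2) * sx"
  proof -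
    have "A1 ** X ** adj B1 = (\<alpha> * x1) *\<^sub>R X + (\<alpha> * y1) *\<^sub>R (X ** Q)"
      unfolding aB1 by (simp add: A1_def B1_def matrix_scaleR_left matrix_scaleR_right matrix_add_ldistrib scaleR_add_right mult.commute)
    moreover have "A2 ** X ** adj B2 = (\<beta> * x2) *\<^sub>R (Q ** X) + (\<beta> * y2) *\<^sub>R (Q ** X ** Q)"
      unfolding aB2 by (simp add: A2_def B2_def matrix_scaleR_left matrix_scaleR_right matrix_add_ldistrib scaleR_add_right mult.commute)
    ultimately have "trace X' = of_real (\<alpha> * x1) * t + of_real (\<alpha> * y1) * sx + of_real (\<beta> * x2) * sx + of_real (\<beta> * y2) * t"
      by (simp add: X'_def trace_add trace_scaleR trXQ trQXQ t_def sx_def)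
    then show ?thesis by (simp add: algebra_simps)
  qed
  have c1: "\<alpha> * x1 + \<beta> * y2 = C * C" by (simp add: x1_def y2_def C_def algebra_simps)
  have c2: "\<alpha> * y1 + \<beta> * x2 = Sn * Sn" by (simp add: y1_def x2_def Sn_def algebra_simps)
  define D where "D = trace (P ** X) - trace (P ** Q ** X)"
  have tsD: "t - sx = D"
  proof -
    have "t - sx = trace ((mat 1 - Q) ** X)" by (simp add: t_def sx_def matrix_diff_rdistrib' trace_sub)
    also have "\<dots> = trace (P ** (mat 1 - Q) ** X)" by (simp add: P1Q)
    finally show ?thesis by (simp add: D_def matrix_diff_ldistrib' matrix_diff_rdistrib' trace_sub)
  qed
  have trX'2: "trace X' = t - of_real (Sn * Sn) * D"
  proof -
    have "trace X' = of_real (C * C) * t + of_real (Sn * Sn) * sx" by (simp add: trX' c1 c2)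
    also have "C * C = 1 - Sn * Sn" using CS1 by simp
    finally show ?thesis using tsD by (simp add: algebra_simps)
  qed
  define a where "a = Re (trace (P ** \<rho>))"
  define b where "b = Re (trace (P ** \<sigma>))"
  have trP: "trace (P ** M ** adj P) = trace (P ** M)" for M
  proof -
    have "trace ((P ** M) ** P) = trace (P ** (P ** M))" by (rule trace_mul_sym)
    then show ?thesis by (simp add: Pa matrix_mul_assoc PP)
  qed
  have trPQ: "trace ((P ** Q) ** M ** adj (P ** Q)) = trace (P ** M)" for M
  proof -
    have "trace ((P ** Q) ** M ** adj (P ** Q)) = trace (((P ** Q) ** M ** Q) ** P)"
      by (simp add: adj_mult Qa Pa matrix_mul_assoc)
    also have "\<dots> = trace (P ** ((P ** Q) ** M ** Q))" by (rule trace_mul_sym)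
    also have "\<dots> = trace (P ** Q ** M ** Q)" by (simp add: matrix_mul_assoc PP)
    also have "\<dots> = trace ((Q ** P ** M) ** Q)" by (simp add: PQ)
    also have "\<dots> = trace (Q ** (Q ** P ** M))" by (rule trace_mul_sym)
    also have "\<dots> = trace (P ** M)" by (simp add: matrix_mul_assoc QQ)
    finally show ?thesis .
  qed
  have trPQX: "trace ((P ** Q) ** X ** adj P) = trace (P ** Q ** X)"
  proof -
    have "trace ((P ** Q ** X) ** P) = trace (P ** (P ** Q ** X))" by (rule trace_mul_sym)
    then show ?thesis by (simp add: Pa matrix_mul_assoc PP)
  qed
  have ab: "0 \<le> a * b"
  proof -
    have "0 \<le> Re (trace (P ** \<rho> ** adj P))" "0 \<le> Re (trace (P ** \<sigma> ** adj P))"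
      using psd_form[OF r] psd_form[OF s]
      by (auto simp: trace_def Re_sum cinner_diag_entry[symmetric] intro!: sum_nonneg)
    then show ?thesis by (simp add: a_def b_def trP)
  qed
  have b1: "cmod (trace (P ** X)) \<le> sqrt (a * b)"
  proof -
    have "cmod (trace (P ** X ** adj P)) ^ 2 \<le> Re (trace (P ** \<rho> ** adj P)) * Re (trace (P ** \<sigma> ** adj P))"
      by (rule CS2[OF bpX])
    then have "cmod (trace (P ** X)) ^ 2 \<le> a * b" by (simp add: trP a_def b_def)
    then show ?thesis by (rule real_le_rsqrt)
  qed
  have b2: "cmod (trace (P ** Q ** X)) \<le> sqrt (a * b)"
  proof -
    have "cmod (trace ((P ** Q) ** X ** adj P)) ^ 2 \<le> Re (trace ((P ** Q) ** \<rho> ** adj (P ** Q))) * Re (trace (P ** \<sigma> ** adj P))"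
      by (rule CS2[OF bpX])
    then have "cmod (trace (P ** Q ** X)) ^ 2 \<le> a * b" by (simp add: trP trPQ trPQX a_def b_def)
    then show ?thesis by (rule real_le_rsqrt)
  qed
  have Dle: "cmod D \<le> 2 * sqrt (a * b)"
    using b1 b2 norm_triangle_ineq4[of "trace (P ** X)" "trace (P ** Q ** X)"] by (simp add: D_def)
  have Sn_bound: "Sn * Sn \<le> (p - q)^2 / (2 * (\<eta> * (1 - \<eta>)))"
  proof -
    define T where "T = \<beta> * \<gamma> + \<alpha> * \<delta>"
    have ST: "Sn * T = p - q"
    proof -
      have "Sn * T = (\<beta> * \<beta>) * (\<gamma> * \<gamma>) - (\<alpha> * \<alpha>) * (\<delta> * \<delta>)" by (simp add: Sn_def T_def algebra_simps)
      then show ?thesis by (simp add: \<alpha>2 \<beta>2 \<gamma>2 \<delta>2 algebra_simps)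
    qed
    have T2: "T * T \<ge> p * (1 - q) + (1 - p) * q"
    proof -
      have "T * T = (\<beta> * \<beta>) * (\<gamma> * \<gamma>) + (\<alpha> * \<alpha>) * (\<delta> * \<delta>) + 2 * (\<alpha> * \<beta> * \<gamma> * \<delta>)"
        by (simp add: T_def algebra_simps)
      moreover have "\<alpha> * \<beta> * \<gamma> * \<delta> \<ge> 0"
        by (intro mult_nonneg_nonneg) (simp_all add: \<alpha>_def \<beta>_def \<gamma>_def \<delta>_def p01 q01)
      ultimately show ?thesis by (simp add: \<alpha>2 \<beta>2 \<gamma>2 \<delta>2)
    qed
    have e: "2 * (\<eta> * (1 - \<eta>)) \<le> T * T" using real_ineq_eta[OF assms(7-10)] T2 by simp
    have epos: "0 < 2 * (\<eta> * (1 - \<eta>))" using assms(3,4) by simp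
    have "(Sn * Sn) * (2 * (\<eta> * (1 - \<eta>))) \<le> (Sn * Sn) * (T * T)"
      by (rule mult_left_mono[OF e]) simp
    also have "\<dots> = (p - q)^2" by (simp add: ST[symmetric] power2_eq_square algebra_simps)
    finally show ?thesis using epos by (simp add: field_simps)
  qed
  have h1: "Re (trace X') = Re t - Sn * Sn * Re D" by (simp add: trX'2)
  have h2: "Sn * Sn * Re D \<le> Sn * Sn * cmod D"
    by (intro mult_left_mono complex_Re_le_cmod) simp
  have h3: "Sn * Sn * cmod D \<le> (p - q)^2 / (2 * (\<eta> * (1 - \<eta>))) * (2 * sqrt (a * b))"
  proof (intro mult_mono Sn_bound Dle)
    show "0 \<le> (p - q)^2 / (2 * (\<eta> * (1 - \<eta>)))"
      using assms(3,4) by (intro divide_nonneg_nonneg) auto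
  qed simp
  have h4: "(p - q)^2 / (2 * (\<eta> * (1 - \<eta>))) * (2 * sqrt (a * b)) = (p - q)^2 / (\<eta> * (1 - \<eta>)) * sqrt (a * b)"
  proof -
    define d where "d = \<eta> * (1 - \<eta>)"
    have "d \<noteq> 0" using assms(3,4) by (simp add: d_def)
    then have "(p - q)^2 / (2 * d) * (2 * sqrt (a * b)) = (p - q)^2 / d * sqrt (a * b)" by simp
    then show ?thesis by (simp add: d_def)
  qed
  have h5: "Re t = sqrt_fidelity \<rho> \<sigma>" by (simp add: t_def trX sqrt_fidelity_def)
  define E where "E = (p - q)^2 / (\<eta> * (1 - \<eta>)) * sqrt (a * b)"
  define F where "F = Sn * Sn * cmod D"
  define G where "G = Sn * Sn * Re D"
  have "Re (trace X') \<ge> sqrt_fidelity \<rho> \<sigma> - E"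
    using h1 h2 h3 h4 h5 unfolding E_def[symmetric] F_def[symmetric] G_def[symmetric] by linarith
  then have "Re (trace X') \<ge> sqrt_fidelity \<rho> \<sigma> - (p - q)^2 / (\<eta> * (1 - \<eta>)) * sqrt (a * b)"
    by (simp add: E_def)
  then show ?thesis using up by (simp add: a_def b_def P_def)
qed

end
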